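(* Let $\alpha\in(0,1]$ and let $(X,\|\cdot\|)$ be a Banach space whose norm $\|\cdot\|$ is differentiable with modulus of smoothness of power type $1+\alpha$. Let $X^*$ be the dual space with dual norm $\|\cdot\|_*$ and dual unit sphere $S^*$. Let $C\subseteq X$ and let $D:C\to S^*$ be a mapping. The following are equivalent: (1) There exists a $C^{1,\alpha}$ convex body $V$ such that $C\subseteq\partial V$ and, for every $x\in C$, the hyperplane $H_x:=\{y\in X: D(x)(y)=D(x)(x)\}$ is tangent to $\partial V$ at $x$ and $V\subseteq H_x^-:=\{y\in X: D(x)(y)\le D(x)(x)\}$. (2) There exists $\delta>0$ such that $$D(y)(y-x)\ge\delta\|D(x)-D(y)\|_*^{1+\frac1\alpha}\quad\text{for all }x,y\in C.$$ Moreover, if $C$ is bounded, then $V$ can be taken to be bounded as well.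
   Context: The modulus of smoothness of $\|\cdot\|$ is $\rho(t)=\sup\{\tfrac{\|x+th\|+\|x-th\|}{2}-1:\|x\|=\|h\|=1\}$; it is of power type $1+\alpha$ if $\rho(t)\le Kt^{1+\alpha}$ for some $K>0$ and all $t>0$ (such spaces are superreflexive). A convex body is a closed convex set with nonempty interior (possibly unbounded). A function $F:X\to\mathbb{R}$ is of class $C^{1,\alpha}$ if it is Fréchet differentiable and $\|DF(x)-DF(y)\|_*\le K\|x-y\|^\alpha$ for some $K>0$. A convex body $V$ is of class $C^{1,\alpha}$ if there exist $M>0$ and a convex $F\in C^{1,\alpha}(X)$ with $\partial V=F^{-1}(1)$ and $M^{-1}\le\|DF(x)\|_*\le M$ for all $x\in\partial V$. *)

theory Defs
  imports "HOL-Analysis.Analysis"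
begin

(* Dual space X* is represented by bounded linear functionals 'a <Rightarrow><^sub>L real,
  with the operator norm as the dual norm. *)

(* Power type 1+alpha: rho(t) <le> K t^(1+alpha), i.e. every quantity under the sup is
  bounded by K t^(1+alpha) (stated pointwise so that it is meaningful also when the
  unit sphere is empty). *)
definition smoothness_power_type :: "real \<Rightarrow> 'a::real_normed_vector itself \<Rightarrow> bool" where
  "smoothness_power_type \<alpha> (_::'a itself) \<longleftrightarrow>
     (\<exists>K>0. \<forall>t>0. \<forall>x h::'a. norm x = 1 \<and> norm h = 1 \<longrightarrow>
        (norm (x + t *\<^sub>R h) + norm (x - t *\<^sub>R h)) / 2 - 1 \<le> K * t powr (1 + \<alpha>))"

definition convex_body :: "'a::real_normed_vector set \<Rightarrow> bool" where
  "convex_body V \<longleftrightarrow> closed V \<and> convex V \<and> interior V \<noteq> {}"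

definition C1_alpha_with :: "real \<Rightarrow> ('a::real_normed_vector \<Rightarrow> real) \<Rightarrow> ('a \<Rightarrow> ('a \<Rightarrow>\<^sub>L real)) \<Rightarrow> bool" where
  "C1_alpha_with \<alpha> F DF \<longleftrightarrow>
     (\<forall>x. (F has_derivative blinfun_apply (DF x)) (at x)) \<and>
     (\<exists>K>0. \<forall>x y. norm (DF x - DF y) \<le> K * norm (x - y) powr \<alpha>)"

definition C1_alpha_body :: "real \<Rightarrow> 'a::real_normed_vector set \<Rightarrow> bool" where
  "C1_alpha_body \<alpha> V \<longleftrightarrow> convex_body V \<and>
     (\<exists>M>0. \<exists>F DF. convex_on UNIV F \<and> C1_alpha_with \<alpha> F DF \<and>
        frontier V = F -` {1} \<and>
        (\<forall>x\<in>frontier V. 1 / M \<le> norm (DF x) \<and> norm (DF x) \<le> M))"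

definition tangent_at :: "'a::real_normed_vector set \<Rightarrow> 'a set \<Rightarrow> 'a \<Rightarrow> bool" where
  "tangent_at H S x \<longleftrightarrow> x \<in> S \<and> x \<in> H \<and>
     ((\<lambda>y. infdist y H / norm (y - x)) \<longlongrightarrow> 0) (at x within S)"

definition hyperplane_at :: "('a \<Rightarrow> ('a::real_normed_vector \<Rightarrow>\<^sub>L real)) \<Rightarrow> 'a \<Rightarrow> 'a set" where
  "hyperplane_at D x = {y. D x y = D x x}"

definition halfspace_at :: "('a \<Rightarrow> ('a::real_normed_vector \<Rightarrow>\<^sub>L real)) \<Rightarrow> 'a \<Rightarrow> 'a set" where
  "halfspace_at D x = {y. D x y \<le> D x x}"

definition supporting_body :: "real \<Rightarrow> 'a::real_normed_vector set \<Rightarrow> ('a \<Rightarrow> ('a \<Rightarrow>\<^sub>L real)) \<Rightarrow> 'a set \<Rightarrow> bool" where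
  "supporting_body \<alpha> C D V \<longleftrightarrow> C1_alpha_body \<alpha> V \<and> C \<subseteq> frontier V \<and>
     (\<forall>x\<in>C. tangent_at (hyperplane_at D x) (frontier V) x \<and> V \<subseteq> halfspace_at D x)"

end

theory Submission
  imports Defs
begin

lemma small_le:
  fixes a K \<alpha> :: real
  assumes "0 < \<alpha>" and H: "\<And>t. 0 < t \<Longrightarrow> t \<le> 1 \<Longrightarrow> a \<le> K * t powr \<alpha>"
  shows "a \<le> 0"
proof (rule ccontr)
  assume "\<not> a \<le> 0" hence a: "a > 0" by simp
  have "a \<le> K" using H[of 1] by simp
  hence K: "K > 0" using a by simp
  define t where "t = min 1 ((a/(2*K)) powr (1/\<alpha>))"
  have t0: "t > 0" using a K by (simp add: t_def)
  have t1: "t \<le> 1" by (simp add: t_def)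
  have "t powr \<alpha> \<le> ((a/(2*K)) powr (1/\<alpha>)) powr \<alpha>"
    using t0 assms(1) by (intro powr_mono2) (auto simp: t_def)
  also have "\<dots> = a/(2*K)" using a K assms(1) by (simp add: powr_powr)
  finally have "K * t powr \<alpha> \<le> K * (a/(2*K))" by (rule mult_left_mono) (use K in auto)
  also have "\<dots> = a/2" using K by simp
  finally show False using H[OF t0 t1] a by simp
qed

lemma convex_slope:
  fixes F :: "'a::real_vector \<Rightarrow> real"
  assumes cvx: "convex_on UNIV F" and s: "0 < s" and t: "0 < t"
  shows "(F x - F (x - s *\<^sub>R h)) / s \<le> (F (x + t *\<^sub>R h) - F x) / t"
proof -
  have gen: "(1 - c) *\<^sub>R (x - s *\<^sub>R h) + c *\<^sub>R (x + t *\<^sub>R h) = x + (c * t - (1 - c) * s) *\<^sub>R h" for c :: real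
    by (simp add: algebra_simps)
  have c0: "(s / (s + t)) * t - (1 - s / (s + t)) * s = 0" using s t by (simp add: field_simps)
  have eq: "x = (1 - s/(s+t)) *\<^sub>R (x - s *\<^sub>R h) + (s/(s+t)) *\<^sub>R (x + t *\<^sub>R h)"
    by (subst gen) (simp only: c0 scaleR_zero_left add_0_right)
  have "F x \<le> (1 - s/(s+t)) * F (x - s *\<^sub>R h) + (s/(s+t)) * F (x + t *\<^sub>R h)"
    using convex_onD[OF cvx, of "s/(s+t)" "x - s *\<^sub>R h" "x + t *\<^sub>R h"] s t
    by (subst eq) (auto simp: divide_simps)
  also have "(1 - s/(s+t)) = t / (s+t)" using s t by (simp add: field_simps)
  finally have "F x \<le> (t * F (x - s *\<^sub>R h) + s * F (x + t *\<^sub>R h)) / (s+t)"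
    by (simp add: add_divide_distrib)
  hence "(s+t) * F x \<le> t * F (x - s *\<^sub>R h) + s * F (x + t *\<^sub>R h)"
    using s t by (simp add: pos_le_divide_eq mult.commute)
  hence "t * (F x - F (x - s *\<^sub>R h)) \<le> s * (F (x + t *\<^sub>R h) - F x)"
    by (simp add: algebra_simps)
  thus ?thesis using s t by (simp add: divide_simps mult.commute)
qed


locale semiconc =
  fixes F :: "'a::real_normed_vector \<Rightarrow> real" and C \<alpha> :: real
  assumes alpha: "0 < \<alpha>"
    and cvx: "convex_on UNIV F"
    and sd: "\<And>x h. F (x+h) + F (x-h) - 2 * F x \<le> C * norm h powr (1+\<alpha>)"
    and bd: "\<And>x. \<exists>B. \<forall>h. norm h \<le> 1 \<longrightarrow> F (x+h) \<le> B"
begin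

definition aa where "aa x h t = (F (x + t *\<^sub>R h) - F x) / t"
definition bb where "bb x h t = (F x - F (x - t *\<^sub>R h)) / t"
definition d where "d x h = Inf {aa x h t |t. t > 0}"

lemma ba: "0 < s \<Longrightarrow> 0 < t \<Longrightarrow> bb x h s \<le> aa x h t"
  unfolding aa_def bb_def by (rule convex_slope[OF cvx])

lemma ab: "0 < t \<Longrightarrow> aa x h t \<le> bb x h t + C * t powr \<alpha> * norm h powr (1+\<alpha>)"
proof -
  assume t: "0 < t"
  have "F (x + t *\<^sub>R h) + F (x - t *\<^sub>R h) - 2 * F x \<le> C * norm (t *\<^sub>R h) powr (1+\<alpha>)"
    by (rule sd)
  also have "norm (t *\<^sub>R h) powr (1+\<alpha>) = t * (t powr \<alpha> * norm h powr (1+\<alpha>))"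
    using t by (simp add: powr_mult powr_add)
  finally have "(F (x + t *\<^sub>R h) + F (x - t *\<^sub>R h) - 2 * F x) / t \<le> C * t powr \<alpha> * norm h powr (1+\<alpha>)"
    using t by (simp add: divide_simps mult_ac)
  thus ?thesis unfolding aa_def bb_def using t by (simp add: diff_divide_distrib add_divide_distrib)
qed

lemma d_ge: "0 < s \<Longrightarrow> bb x h s \<le> d x h"
  unfolding d_def by (rule cInf_greatest) (auto intro: ba exI[of _ 1])

lemma d_le: "0 < t \<Longrightarrow> d x h \<le> aa x h t"
  unfolding d_def
  by (rule cInf_lower) (auto intro!: bdd_belowI[of _ "bb x h 1"] ba)

lemma d_unique:
  assumes "\<And>t. 0 < t \<Longrightarrow> bb x h t \<le> e \<and> e \<le> aa x h t"
  shows "d x h = e"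
proof -
  have "d x h - e \<le> 0"
  proof (rule small_le[OF alpha])
    fix t :: real assume "0 < t" "t \<le> 1"
    thus "d x h - e \<le> (C * norm h powr (1+\<alpha>)) * t powr \<alpha>"
      using d_le[of t x h] ab[of t x h] assms[of t] by (simp add: mult_ac)
  qed
  moreover have "e - d x h \<le> 0"
  proof (rule small_le[OF alpha])
    fix t :: real assume "0 < t" "t \<le> 1"
    thus "e - d x h \<le> (C * norm h powr (1+\<alpha>)) * t powr \<alpha>"
      using d_ge[of t x h] ab[of t x h] assms[of t] by (simp add: mult_ac)
  qed
  ultimately show ?thesis by simp
qed

lemma d_lower: "F x + d x h \<le> F (x + h)"
  using d_le[of 1 x h] by (simp add: aa_def)

lemma d_upper: "F (x + h) \<le> F x + d x h + C * norm h powr (1+\<alpha>)"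
  using d_ge[of 1 x h] ab[of 1 x h] by (simp add: aa_def bb_def)

lemma d_neg: "d x (-h) = - d x h"
proof (rule d_unique)
  fix t :: real assume t: "0 < t"
  have 1: "bb x (-h) t = - aa x h t" "aa x (-h) t = - bb x h t"
    by (simp_all add: aa_def bb_def minus_divide_left)
  show "bb x (- h) t \<le> - d x h \<and> - d x h \<le> aa x (- h) t"
    unfolding 1 using d_le[OF t] d_ge[OF t] by auto
qed

lemma d_pos_hom: "0 < c \<Longrightarrow> d x (c *\<^sub>R h) = c * d x h"
proof (rule d_unique)
  fix t :: real assume c: "0 < c" and t: "0 < t"
  have 1: "aa x (c *\<^sub>R h) t = c * aa x h (t * c)" "bb x (c *\<^sub>R h) t = c * bb x h (t * c)"
    using c t by (simp_all add: aa_def bb_def)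
  have tc: "0 < t * c" using c t by simp
  show "bb x (c *\<^sub>R h) t \<le> c * d x h \<and> c * d x h \<le> aa x (c *\<^sub>R h) t"
    unfolding 1 using d_le[OF tc, of x h] d_ge[OF tc, of x h] c by auto
qed

lemma d_zero: "d x 0 = 0"
  using d_neg[of x 0] by simp

lemma d_sub: "d x (h1 + h2) \<le> d x h1 + d x h2"
proof -
  have "d x (h1 + h2) - (d x h1 + d x h2) \<le> 0"
  proof (rule small_le[OF alpha])
    fix t :: real assume t: "0 < t" "t \<le> 1"
    have t2: "0 < 2 * t" using t by simp
    have mid: "x + t *\<^sub>R (h1 + h2) = (1 - 1/2) *\<^sub>R (x + (2*t) *\<^sub>R h1) + (1/2) *\<^sub>R (x + (2*t) *\<^sub>R h2)"
      by (simp add: algebra_simps scaleR_add_left[symmetric])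
    have "F (x + t *\<^sub>R (h1 + h2)) \<le> (1 - 1/2) * F (x + (2*t) *\<^sub>R h1) + (1/2) * F (x + (2*t) *\<^sub>R h2)"
      unfolding mid by (rule convex_onD[OF cvx]) auto
    hence "aa x (h1 + h2) t \<le> aa x h1 (2*t) + aa x h2 (2*t)"
      using t by (simp add: aa_def divide_simps)
    moreover have "aa x h1 (2*t) \<le> d x h1 + C * (2*t) powr \<alpha> * norm h1 powr (1+\<alpha>)"
      using ab[OF t2, of x h1] d_ge[OF t2, of x h1] by simp
    moreover have "aa x h2 (2*t) \<le> d x h2 + C * (2*t) powr \<alpha> * norm h2 powr (1+\<alpha>)"
      using ab[OF t2, of x h2] d_ge[OF t2, of x h2] by simp
    ultimately have "d x (h1 + h2) - (d x h1 + d x h2) \<le>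
        C * (2*t) powr \<alpha> * (norm h1 powr (1+\<alpha>) + norm h2 powr (1+\<alpha>))"
      using d_le[OF t(1), of x "h1+h2"] by (simp add: algebra_simps)
    also have "\<dots> = (C * 2 powr \<alpha> * (norm h1 powr (1+\<alpha>) + norm h2 powr (1+\<alpha>))) * t powr \<alpha>"
      using t by (simp add: powr_mult)
    finally show "d x (h1 + h2) - (d x h1 + d x h2) \<le> (C * 2 powr \<alpha> * (norm h1 powr (1+\<alpha>) + norm h2 powr (1+\<alpha>))) * t powr \<alpha>" .
  qed
  thus ?thesis by simp
qed

lemma d_add: "d x (h1 + h2) = d x h1 + d x h2"
proof -
  have "d x h1 \<le> d x (h1 + h2) + d x (-h2)"
    using d_sub[of x "h1+h2" "-h2"] by simp
  thus ?thesis using d_sub[of x h1 h2] d_neg[of x h2] by simp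
qed

lemma d_scale: "d x (c *\<^sub>R h) = c * d x h"
proof (cases c "0::real" rule: linorder_cases)
  case less
  have "d x (c *\<^sub>R h) = d x (- ((-c) *\<^sub>R h))" by simp
  also have "\<dots> = - ((-c) * d x h)" using less by (simp only: d_neg d_pos_hom)
  finally show ?thesis by simp
qed (auto simp: d_zero d_pos_hom)

lemma d_bounded: "\<exists>K. \<forall>h. norm (d x h) \<le> norm h * K"
proof -
  obtain B where B: "\<And>h. norm h \<le> 1 \<Longrightarrow> F (x+h) \<le> B" using bd by blast
  have unit: "\<bar>d x h\<bar> \<le> B - F x" if "norm h \<le> 1" for h
  proof -
    have "d x h \<le> B - F x" using d_lower[of x h] B[OF that] by simp
    moreover have "d x (-h) \<le> B - F x" using d_lower[of x "-h"] B[of "-h"] that by simp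
    ultimately show ?thesis using d_neg[of x h] by simp
  qed
  show ?thesis
  proof (intro exI allI)
    fix h
    show "norm (d x h) \<le> norm h * (B - F x)"
    proof (cases "h = 0")
      case True thus ?thesis using unit[of 0] by (simp add: d_zero)
    next
      case False
      hence n: "norm h > 0" by simp
      have "d x h = norm h * d x ((1 / norm h) *\<^sub>R h)"
        using n by (simp add: d_scale)
      moreover have "\<bar>d x ((1 / norm h) *\<^sub>R h)\<bar> \<le> B - F x" using n by (intro unit) simp
      ultimately show ?thesis using n by (simp add: abs_mult mult_left_mono)
    qed
  qed
qed

lemma d_bl: "bounded_linear (d x)"
proof -
  obtain K where "\<And>h. norm (d x h) \<le> norm h * K" using d_bounded by blast
  thus ?thesis by (intro bounded_linear_intro[of _ K]) (auto simp: d_add d_scale)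
qed

definition DF where "DF x = Blinfun (d x)"

lemma DF_apply: "blinfun_apply (DF x) h = d x h"
  unfolding DF_def using d_bl by (simp add: bounded_linear_Blinfun_apply)

lemma sandwich: "F x + DF x h \<le> F (x + h)" "F (x + h) \<le> F x + DF x h + C * norm h powr (1+\<alpha>)"
  using d_lower d_upper by (simp_all add: DF_apply)

lemma deriv: "(F has_derivative blinfun_apply (DF x)) (at x)"
  unfolding has_derivative_at_alt
proof (intro conjI allI impI)
  show "bounded_linear (blinfun_apply (DF x))" by (rule blinfun.bounded_linear_right)
  fix e :: real assume e: "0 < e"
  define \<delta> where "\<delta> = (e / (\<bar>C\<bar> + 1)) powr (1/\<alpha>)"
  have \<delta>: "0 < \<delta>" using e by (simp add: \<delta>_def)
  show "\<exists>d>0. \<forall>y. norm (y - x) < d \<longrightarrow> norm (F y - F x - blinfun_apply (DF x) (y - x)) \<le> e * norm (y - x)"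
  proof (intro exI[of _ \<delta>] conjI allI impI \<delta>)
    fix y assume y: "norm (y - x) < \<delta>"
    let ?h = "y - x"
    have s1: "0 \<le> F y - F x - DF x ?h" using sandwich(1)[of x ?h] by simp
    have s2: "F y - F x - DF x ?h \<le> C * norm ?h powr (1+\<alpha>)" using sandwich(2)[of x ?h] by simp
    have "norm ?h powr \<alpha> \<le> \<delta> powr \<alpha>" using y alpha by (intro powr_mono2) auto
    also have "\<dots> = e / (\<bar>C\<bar> + 1)" using e alpha by (simp add: \<delta>_def powr_powr)
    finally have "(\<bar>C\<bar> + 1) * norm ?h powr \<alpha> \<le> e" by (simp add: field_simps)
    hence "\<bar>C\<bar> * norm ?h powr \<alpha> \<le> e" by (smt (verit) mult_right_mono powr_ge_zero distrib_right)
    hence "\<bar>C\<bar> * norm ?h powr \<alpha> * norm ?h \<le> e * norm ?h" by (simp add: mult_right_mono)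
    moreover have "C * norm ?h powr (1+\<alpha>) \<le> \<bar>C\<bar> * norm ?h powr \<alpha> * norm ?h"
      by (cases "?h = 0") (auto simp: powr_add mult_right_mono)
    ultimately show "norm (F y - F x - blinfun_apply (DF x) (y - x)) \<le> e * norm (y - x)"
      using s1 s2 by simp
  qed
qed

lemma holder: "norm (DF x - DF y) \<le> (2 * \<bar>C\<bar>) * norm (x - y) powr \<alpha>"
proof (cases "x = y")
  case True thus ?thesis by simp
next
  case False
  define r where "r = norm (x - y)"
  have r: "r > 0" using False by (simp add: r_def)
  show ?thesis
  proof (rule norm_blinfun_bound)
    show "0 \<le> 2 * \<bar>C\<bar> * norm (x - y) powr \<alpha>" by simp
    have one: "(DF x - DF y) u \<le> 2 * \<bar>C\<bar> * r powr \<alpha> * norm u" for u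
    proof (cases "u = 0")
      case True thus ?thesis by simp
    next
      case False
      define w where "w = (r / norm u) *\<^sub>R u"
      have nw: "norm w = r" using False r by (simp add: w_def)
      have 1: "F x + DF x (y + w - x) \<le> F (y + w)" using sandwich(1)[of x "y + w - x"] by simp
      have 2: "F (y + w) \<le> F y + DF y w + C * r powr (1+\<alpha>)" using sandwich(2)[of y w] nw by simp
      have 3: "F y \<le> F x + DF x (y - x) + C * r powr (1+\<alpha>)"
        using sandwich(2)[of x "y - x"] by (simp add: r_def norm_minus_commute)
      have "DF x (y + w - x) = DF x (y - x) + DF x w" by (simp add: blinfun.add_right[symmetric] algebra_simps)
      hence "(DF x - DF y) w \<le> 2 * C * r powr (1+\<alpha>)" using 1 2 3 by (simp add: blinfun.diff_left)
      also have "\<dots> \<le> 2 * \<bar>C\<bar> * r powr (1+\<alpha>)" by (simp add: mult_right_mono)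
      also have "r powr (1+\<alpha>) = r * r powr \<alpha>" using r by (simp add: powr_add)
      finally have "(r / norm u) * (DF x - DF y) u \<le> 2 * \<bar>C\<bar> * (r * r powr \<alpha>)"
        by (simp add: w_def blinfun.scaleR_right)
      hence "(DF x - DF y) u \<le> 2 * \<bar>C\<bar> * r powr \<alpha> * norm u"
        using r False by (simp add: field_simps)
      thus ?thesis .
    qed
    fix u
    have "(DF x - DF y) (-u) \<le> 2 * \<bar>C\<bar> * r powr \<alpha> * norm u" using one[of "-u"] by simp
    hence "- ((DF x - DF y) u) \<le> 2 * \<bar>C\<bar> * r powr \<alpha> * norm u" by (simp add: blinfun.minus_right)
    thus "norm ((DF x - DF y) u) \<le> 2 * \<bar>C\<bar> * norm (x - y) powr \<alpha> * norm u"
      using one[of u] by (simp add: r_def)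
  qed
qed

lemma C1: "C1_alpha_with \<alpha> F DF"
  unfolding C1_alpha_with_def
proof (intro conjI allI exI[of _ "2 * \<bar>C\<bar> + 1"])
  show "(F has_derivative blinfun_apply (DF x)) (at x)" for x by (rule deriv)
  show "0 < 2 * \<bar>C\<bar> + 1" by simp
  fix x y
  show "norm (DF x - DF y) \<le> (2 * \<bar>C\<bar> + 1) * norm (x - y) powr \<alpha>"
    using holder[of x y] by (smt (verit) mult_right_mono powr_ge_zero)
qed

end


lemma powr_subadd:
  fixes x y \<alpha> :: real
  assumes "0 \<le> x" "0 \<le> y" "0 < \<alpha>" "\<alpha> \<le> 1"
  shows "(x + y) powr \<alpha> \<le> x powr \<alpha> + y powr \<alpha>"
proof (cases "x + y = 0")
  case True thus ?thesis using assms by simp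
next
  case False
  hence xy: "x + y > 0" using assms by simp
  define s where "s = x / (x + y)"
  have s: "0 \<le> s" "s \<le> 1" using assms xy by (auto simp: s_def)
  have s1: "1 - s = y / (x + y)" using xy by (simp add: s_def field_simps)
  have "s \<le> s powr \<alpha>" using powr_mono'[of \<alpha> 1 s] s assms by simp
  moreover have "1 - s \<le> (1 - s) powr \<alpha>" using powr_mono'[of \<alpha> 1 "1 - s"] s assms by simp
  ultimately have "1 \<le> s powr \<alpha> + (1 - s) powr \<alpha>" by simp
  hence "(x + y) powr \<alpha> * 1 \<le> (x + y) powr \<alpha> * (s powr \<alpha> + (1 - s) powr \<alpha>)"
    by (intro mult_left_mono) auto
  also have "\<dots> = ((x + y) * s) powr \<alpha> + ((x + y) * (1 - s)) powr \<alpha>"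
    using s xy by (simp add: powr_mult distrib_left)
  finally have "(x + y) powr \<alpha> * 1 \<le> ((x + y) * s) powr \<alpha> + ((x + y) * (1 - s)) powr \<alpha>" .
  moreover have "(x + y) * s = x" "(x + y) * (1 - s) = y" using xy by (simp_all add: s_def field_simps)
  ultimately show ?thesis by simp
qed

lemma powr_holder:
  fixes a c \<alpha> :: real
  assumes "0 \<le> a" "0 \<le> c" "0 < \<alpha>" "\<alpha> \<le> 1"
  shows "\<bar>a powr \<alpha> - c powr \<alpha>\<bar> \<le> \<bar>a - c\<bar> powr \<alpha>"
proof -
  have *: "y powr \<alpha> - x powr \<alpha> \<le> (y - x) powr \<alpha>" if "0 \<le> x" "x \<le> y" for x y :: real
    using powr_subadd[of x "y - x" \<alpha>] that assms by simp
  show ?thesis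
  proof (cases "c \<le> a")
    case True
    moreover have "c powr \<alpha> \<le> a powr \<alpha>" using True assms by (intro powr_mono2) auto
    ultimately show ?thesis using *[of c a] assms by simp
  next
    case False
    moreover have "a powr \<alpha> \<le> c powr \<alpha>" using False assms by (intro powr_mono2) auto
    ultimately show ?thesis using *[of a c] assms by (simp add: abs_minus_commute)
  qed
qed

lemma powr_tangent:
  fixes x y p :: real
  assumes "0 \<le> x" "0 \<le> y" "1 \<le> p"
  shows "y powr p + p * y powr (p - 1) * (x - y) \<le> x powr p"
proof (cases "y = 0")
  case True thus ?thesis using assms by simp
next
  case False
  hence y: "y > 0" using assms by simp
  show ?thesis
  proof (cases "x = 0")
    case True
    have "y powr p = y * y powr (p - 1)" using y by (simp add: powr_mult_base)
    hence "y powr p + p * y powr (p - 1) * (x - y) = (1 - p) * (y * y powr (p - 1))"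
      using True by (simp add: algebra_simps)
    also have "\<dots> \<le> 0" using assms y by (intro mult_nonpos_nonneg) auto
    finally show ?thesis using True by simp
  next
    case False
    hence x: "x > 0" using assms by simp
    have "x powr p - y powr p \<ge> p * y powr (p - 1) * (x - y)"
      by (rule convex_on_imp_above_tangent[OF powr_convex[OF assms(3)]])
        (use x y in \<open>auto intro!: DERIV_subset[OF has_real_derivative_powr] simp: interior_open\<close>)
    thus ?thesis by simp
  qed
qed

lemma real_psi:
  fixes a b c \<eta> E \<alpha> :: real
  assumes "0 \<le> a" "0 \<le> b" "0 < c" "\<bar>a - c\<bar> \<le> \<eta>" "\<bar>b - c\<bar> \<le> \<eta>" "a + b - 2*c \<le> E"
    and al: "0 < \<alpha>" "\<alpha> \<le> 1"
  shows "a powr (1+\<alpha>) + b powr (1+\<alpha>) - 2 * c powr (1+\<alpha>)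
     \<le> (1+\<alpha>) * c powr \<alpha> * E + 2 * (1+\<alpha>) * \<eta> powr (1+\<alpha>)"
proof -
  let ?p = "1 + \<alpha>"
  have eta: "0 \<le> \<eta>" using assms(4) by simp
  have one: "x powr ?p - c powr ?p \<le> ?p * c powr \<alpha> * (x - c) + ?p * \<eta> powr ?p"
    if x: "0 \<le> x" "\<bar>x - c\<bar> \<le> \<eta>" for x
  proof -
    have "c powr ?p + ?p * x powr \<alpha> * (c - x) \<le> x powr ?p \<Longrightarrow> False \<or> True" by simp
    have t: "x powr ?p + ?p * x powr \<alpha> * (c - x) \<le> c powr ?p"
      using powr_tangent[of c x ?p] x assms(3) al by simp
    have "(x powr \<alpha> - c powr \<alpha>) * (x - c) \<le> \<bar>x powr \<alpha> - c powr \<alpha>\<bar> * \<bar>x - c\<bar>"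
      by (metis abs_ge_self abs_mult)
    also have "\<dots> \<le> \<bar>x - c\<bar> powr \<alpha> * \<bar>x - c\<bar>"
      by (intro mult_right_mono powr_holder) (use x assms(3) al in auto)
    also have "\<dots> \<le> \<eta> powr \<alpha> * \<eta>"
      by (intro mult_mono powr_mono2) (use x al eta in auto)
    also have "\<dots> = \<eta> powr ?p" using eta by (simp add: powr_add)
    finally have "(x powr \<alpha> - c powr \<alpha>) * (x - c) \<le> \<eta> powr ?p" .
    hence "?p * ((x powr \<alpha> - c powr \<alpha>) * (x - c)) \<le> ?p * \<eta> powr ?p"
      using al by (intro mult_left_mono) auto
    thus ?thesis using t by (simp add: algebra_simps)
  qed
  have "a powr ?p - c powr ?p + (b powr ?p - c powr ?p) \<le> ?p * c powr \<alpha> * (a + b - 2*c) + 2 * ?p * \<eta> powr ?p"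
    using one[of a] one[of b] assms by (simp add: algebra_simps)
  also have "?p * c powr \<alpha> * (a + b - 2*c) \<le> ?p * c powr \<alpha> * E"
    using assms(6) al by (intro mult_left_mono) auto
  finally show ?thesis by simp
qed

lemma norm_sd:
  fixes u h :: "'a::real_normed_vector" and K \<alpha> :: real
  assumes Kh: "\<And>t (x::'a) (h::'a). t > 0 \<Longrightarrow> norm x = 1 \<Longrightarrow> norm h = 1 \<Longrightarrow>
        (norm (x + t *\<^sub>R h) + norm (x - t *\<^sub>R h)) / 2 - 1 \<le> K * t powr (1 + \<alpha>)"
    and u: "u \<noteq> 0"
  shows "norm (u + h) + norm (u - h) - 2 * norm u \<le> 2 * K * norm h powr (1+\<alpha>) / norm u powr \<alpha>"
proof (cases "h = 0")
  case True thus ?thesis by simp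
next
  case False
  define c where "c = norm u"
  define \<eta> where "\<eta> = norm h"
  have c: "c > 0" and e: "\<eta> > 0" using u False by (auto simp: c_def \<eta>_def)
  define x where "x = (1/c) *\<^sub>R u"
  define k where "k = (1/\<eta>) *\<^sub>R h"
  define t where "t = \<eta> / c"
  have t: "t > 0" using c e by (simp add: t_def)
  have nx: "norm x = 1" and nk: "norm k = 1" using c e by (auto simp: x_def k_def c_def \<eta>_def)
  have tk: "t *\<^sub>R k = (1/c) *\<^sub>R h" using c e by (simp add: t_def k_def)
  have p1: "x + t *\<^sub>R k = (1/c) *\<^sub>R (u + h)" "x - t *\<^sub>R k = (1/c) *\<^sub>R (u - h)"
    unfolding tk x_def by (simp_all add: scaleR_right_distrib scaleR_right_diff_distrib)
  have "(norm (u + h) / c + norm (u - h) / c) / 2 - 1 \<le> K * t powr (1 + \<alpha>)"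
    using Kh[OF t nx nk] unfolding p1 using c by simp
  hence "norm (u + h) + norm (u - h) - 2 * c \<le> 2 * c * (K * t powr (1 + \<alpha>))"
    using c by (simp add: field_simps)
  also have "t powr (1 + \<alpha>) = \<eta> powr (1+\<alpha>) / (c * c powr \<alpha>)"
    using c e by (simp add: t_def powr_divide powr_add)
  also have "2 * c * (K * (\<eta> powr (1+\<alpha>) / (c * c powr \<alpha>))) = 2 * K * \<eta> powr (1+\<alpha>) / c powr \<alpha>"
    using c by (simp add: field_simps)
  finally show ?thesis by (simp add: c_def \<eta>_def)
qed

lemma psi_sd:
  fixes u h :: "'a::real_normed_vector" and K \<alpha> :: real
  assumes Kh: "\<And>t (x::'a) (h::'a). t > 0 \<Longrightarrow> norm x = 1 \<Longrightarrow> norm h = 1 \<Longrightarrow>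
        (norm (x + t *\<^sub>R h) + norm (x - t *\<^sub>R h)) / 2 - 1 \<le> K * t powr (1 + \<alpha>)"
    and K: "K > 0" and al: "0 < \<alpha>" "\<alpha> \<le> 1"
  shows "norm (u + h) powr (1+\<alpha>) + norm (u - h) powr (1+\<alpha>) - 2 * norm u powr (1+\<alpha>)
     \<le> (2 * (1+\<alpha>) * (K + 1)) * norm h powr (1+\<alpha>)"
proof (cases "u = 0")
  case True
  thus ?thesis using al K by (simp add: algebra_simps)
next
  case False
  have c: "norm u > 0" using False by simp
  have "norm (u + h) powr (1+\<alpha>) + norm (u - h) powr (1+\<alpha>) - 2 * norm u powr (1+\<alpha>)
     \<le> (1+\<alpha>) * norm u powr \<alpha> * (2 * K * norm h powr (1+\<alpha>) / norm u powr \<alpha>) + 2 * (1+\<alpha>) * norm h powr (1+\<alpha>)"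
  proof (rule real_psi[OF _ _ c _ _ norm_sd[OF Kh False] al])
    show "\<bar>norm (u + h) - norm u\<bar> \<le> norm h" using norm_triangle_ineq3[of "u+h" u] by simp
    show "\<bar>norm (u - h) - norm u\<bar> \<le> norm h" using norm_triangle_ineq3[of "u-h" u] by simp
  qed auto
  also have "\<dots> = (2 * (1+\<alpha>) * (K + 1)) * norm h powr (1+\<alpha>)"
    using c by (simp add: field_simps)
  finally show ?thesis .
qed


lemma blinfun_norm_le:
  fixes f :: "'a::real_normed_vector \<Rightarrow>\<^sub>L real"
  assumes H: "\<And>h. norm h \<le> 1 \<Longrightarrow> f h \<le> B"
  shows "norm f \<le> B"
proof -
  have B: "0 \<le> B" using H[of 0] by simp
  have "\<bar>f h\<bar> \<le> B * norm h" for h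
  proof (cases "h = 0")
    case True thus ?thesis by simp
  next
    case False
    hence n: "norm h > 0" by simp
    have e: "f h = norm h * f ((1/norm h) *\<^sub>R h)" using n by (simp add: blinfun.scaleR_right)
    have 1: "f ((1/norm h) *\<^sub>R h) \<le> B" using n by (intro H) simp
    have 2: "- f ((1/norm h) *\<^sub>R h) \<le> B" using n H[of "- ((1/norm h) *\<^sub>R h)"]
      by (simp add: blinfun.minus_right)
    show ?thesis using 1 2 n unfolding e by (simp add: abs_mult abs_le_iff mult.commute)
  qed
  thus ?thesis by (intro norm_blinfun_bound B) simp
qed

lemma blinfun_unit_half:
  fixes f :: "'a::real_normed_vector \<Rightarrow>\<^sub>L real"
  assumes "f \<noteq> 0"
  shows "\<exists>u. norm u = 1 \<and> norm f / 2 \<le> f u"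
proof (rule ccontr)
  assume A: "\<not> ?thesis"
  have "norm f \<le> norm f / 2"
  proof (rule blinfun_norm_le)
    fix h :: 'a assume h: "norm h \<le> 1"
    show "f h \<le> norm f / 2"
    proof (cases "h = 0")
      case True thus ?thesis by simp
    next
      case False
      hence n: "norm h > 0" by simp
      have nu: "norm ((1/norm h) *\<^sub>R h) = 1" using n by simp
      from A nu have "\<not> norm f / 2 \<le> f ((1/norm h) *\<^sub>R h)" by blast
      hence "f ((1/norm h) *\<^sub>R h) < norm f / 2" by simp
      hence "f h < norm h * (norm f / 2)" using n by (simp add: blinfun.scaleR_right field_simps)
      also have "\<dots> \<le> norm f / 2" using h by (simp add: mult_left_le_one_le)
      finally show ?thesis by simp
    qed
  qed
  thus False using assms by simp
qed

lemma blinfun_exists_one: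
  fixes f :: "'a::real_normed_vector \<Rightarrow>\<^sub>L real"
  assumes "f \<noteq> 0"
  shows "\<exists>w. f w = 1 \<and> norm w \<le> 2 / norm f"
proof -
  obtain u where u: "norm u = 1" "norm f / 2 \<le> f u" using blinfun_unit_half[OF assms] by blast
  have nf: "norm f > 0" using assms by simp
  hence fu: "f u > 0" using u by linarith
  have "norm ((1 / f u) *\<^sub>R u) = 1 / f u" using u fu by simp
  also have "\<dots> \<le> 2 / norm f" using u nf fu by (simp add: field_simps)
  finally show ?thesis using fu by (intro exI[of _ "(1 / f u) *\<^sub>R u"]) (simp add: blinfun.scaleR_right)
qed

lemma infdist_geI:
  assumes "H \<noteq> {}" "\<And>z. z \<in> H \<Longrightarrow> c \<le> dist y z"
  shows "c \<le> infdist y H"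
  using assms by (simp add: infdist_notempty cINF_greatest)

lemma convex_sublevel:
  assumes "convex_on UNIV G" shows "convex {z. G z \<le> c}"
proof (rule convexI)
  fix x y :: 'a and u v :: real
  assume "x \<in> {z. G z \<le> c}" "y \<in> {z. G z \<le> c}" "0 \<le> u" "0 \<le> v" "u + v = 1"
  moreover have "G (u *\<^sub>R x + v *\<^sub>R y) \<le> u * G x + v * G y"
  proof -
    have u: "u = 1 - v" using calculation by simp
    show ?thesis unfolding u using convex_onD[OF assms, of v x y] calculation by simp
  qed
  moreover have "u * G x + v * G y \<le> u * c + v * c"
    using calculation by (intro add_mono mult_left_mono) auto
  ultimately show "u *\<^sub>R x + v *\<^sub>R y \<in> {z. G z \<le> c}" by (simp add: distrib_right[symmetric])
qed

lemma body_generic: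
  fixes G :: "'a::real_normed_vector \<Rightarrow> real"
  assumes cvx: "convex_on UNIV G" and C1: "C1_alpha_with \<alpha> G DG"
    and low: "\<And>x h. G x + DG x h \<le> G (x + h)"
    and ex: "\<exists>z. G z < 1"
    and Mb: "Mb > 0" "\<And>z. G z = 1 \<Longrightarrow> 1 / Mb \<le> norm (DG z) \<and> norm (DG z) \<le> Mb"
  shows "C1_alpha_body \<alpha> {z. G z \<le> 1}" "frontier {z. G z \<le> 1} = {z. G z = 1}"
proof -
  have der: "\<And>x. (G has_derivative blinfun_apply (DG x)) (at x)" using C1 by (simp add: C1_alpha_with_def)
  have cont: "continuous_on UNIV G"
    using der by (intro continuous_at_imp_continuous_on) (blast intro: has_derivative_continuous)
  have cl: "closed {z. G z \<le> 1}" using cont by (intro closed_Collect_le) auto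
  have op: "open {z. G z < 1}" using cont by (intro open_Collect_less) auto
  have int: "interior {z. G z \<le> 1} = {z. G z < 1}"
  proof
    show "{z. G z < 1} \<subseteq> interior {z. G z \<le> 1}"
      using op by (intro interior_maximal) auto
    show "interior {z. G z \<le> 1} \<subseteq> {z. G z < 1}"
    proof
      fix z assume z: "z \<in> interior {z. G z \<le> 1}"
      then obtain r where r: "r > 0" "ball z r \<subseteq> {z. G z \<le> 1}"
        by (meson mem_interior)
      have Gz: "G z \<le> 1" using z interior_subset by blast
      show "z \<in> {z. G z < 1}"
      proof (rule ccontr)
        assume "z \<notin> {z. G z < 1}"
        hence G1: "G z = 1" using Gz by simp
        hence "DG z \<noteq> 0" using Mb(2)[of z] Mb(1) by auto
        then obtain u where u: "norm u = 1" "norm (DG z) / 2 \<le> DG z u"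
          using blinfun_unit_half by blast
        have pos: "DG z u > 0" using u \<open>DG z \<noteq> 0\<close> proof - have "norm (DG z) > 0" using \<open>DG z \<noteq> 0\<close> by simp thus ?thesis using u by linarith qed
        have "z + (r/2) *\<^sub>R u \<in> ball z r" using r u by (simp add: dist_norm)
        hence "G (z + (r/2) *\<^sub>R u) \<le> 1" using r by blast
        moreover have "G z + DG z ((r/2) *\<^sub>R u) \<le> G (z + (r/2) *\<^sub>R u)" by (rule low)
        moreover have "DG z ((r/2) *\<^sub>R u) > 0" using pos r by (simp add: blinfun.scaleR_right)
        ultimately show False using G1 by simp
      qed
    qed
  qed
  show fr: "frontier {z. G z \<le> 1} = {z. G z = 1}"
    unfolding frontier_def closure_closed[OF cl] int by auto
  show "C1_alpha_body \<alpha> {z. G z \<le> 1}"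
    unfolding C1_alpha_body_def convex_body_def
  proof (intro conjI exI[of _ Mb] exI[of _ G] exI[of _ DG])
    show "closed {z. G z \<le> 1}" by (rule cl)
    show "convex {z. G z \<le> 1}" by (rule convex_sublevel[OF cvx])
    show "interior {z. G z \<le> 1} \<noteq> {}" using ex int by auto
    show "frontier {z. G z \<le> 1} = G -` {1}" using fr by auto
    show "\<forall>x\<in>frontier {z. G z \<le> 1}. 1 / Mb \<le> norm (DG x) \<and> norm (DG x) \<le> Mb"
      using fr Mb by auto
  qed (use Mb cvx C1 in auto)
qed


lemma real_powr_convex:
  fixes a b t p :: real
  assumes "0 \<le> a" "0 \<le> b" "0 \<le> t" "t \<le> 1" "1 \<le> p"
  shows "((1 - t) * a + t * b) powr p \<le> (1 - t) * a powr p + t * b powr p"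
proof -
  define z where "z = (1 - t) * a + t * b"
  have z: "0 \<le> z" using assms by (simp add: z_def)
  have 1: "z powr p + p * z powr (p - 1) * (a - z) \<le> a powr p" by (rule powr_tangent) (use assms z in auto)
  have 2: "z powr p + p * z powr (p - 1) * (b - z) \<le> b powr p" by (rule powr_tangent) (use assms z in auto)
  have "(1 - t) * (z powr p + p * z powr (p - 1) * (a - z)) + t * (z powr p + p * z powr (p - 1) * (b - z))
     \<le> (1 - t) * a powr p + t * b powr p"
    using 1 2 assms by (intro add_mono mult_left_mono) auto
  moreover have "(1 - t) * (z powr p + p * z powr (p - 1) * (a - z)) + t * (z powr p + p * z powr (p - 1) * (b - z))
     = z powr p + p * z powr (p - 1) * ((1 - t) * a + t * b - z)"
    by (simp add: algebra_simps)
  ultimately show ?thesis by (simp add: z_def)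
qed

lemma psi_convex:
  assumes "0 < \<alpha>"
  shows "convex_on UNIV (\<lambda>u::'a::real_normed_vector. norm u powr (1+\<alpha>))"
proof (rule convex_onI)
  fix t :: real and x y :: 'a assume t: "0 < t" "t < 1"
  have "norm ((1 - t) *\<^sub>R x + t *\<^sub>R y) \<le> (1 - t) * norm x + t * norm y"
    by (rule order_trans[OF norm_triangle_ineq]) (use t in simp)
  hence "norm ((1 - t) *\<^sub>R x + t *\<^sub>R y) powr (1+\<alpha>) \<le> ((1 - t) * norm x + t * norm y) powr (1+\<alpha>)"
    using assms by (intro powr_mono2) auto
  also have "\<dots> \<le> (1 - t) * norm x powr (1+\<alpha>) + t * norm y powr (1+\<alpha>)"
    using t assms by (intro real_powr_convex) auto
  finally show "norm ((1 - t) *\<^sub>R x + t *\<^sub>R y) powr (1+\<alpha>) \<le> (1 - t) * norm x powr (1+\<alpha>) + t * norm y powr (1+\<alpha>)" .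
qed simp

lemma psi_semiconc:
  assumes Kh: "\<And>t (x::'a::real_normed_vector) (h::'a). t > 0 \<Longrightarrow> norm x = 1 \<Longrightarrow> norm h = 1 \<Longrightarrow>
        (norm (x + t *\<^sub>R h) + norm (x - t *\<^sub>R h)) / 2 - 1 \<le> K * t powr (1 + \<alpha>)"
    and K: "K > 0" and al: "0 < \<alpha>" "\<alpha> \<le> 1"
  shows "semiconc (\<lambda>u::'a. norm u powr (1+\<alpha>)) (2 * (1+\<alpha>) * (K + 1)) \<alpha>"
proof
  show "0 < \<alpha>" by (rule al)
  show "convex_on UNIV (\<lambda>u::'a. norm u powr (1+\<alpha>))" by (rule psi_convex[OF al(1)])
  show "norm (x + h) powr (1 + \<alpha>) + norm (x - h) powr (1 + \<alpha>) - 2 * norm x powr (1 + \<alpha>)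
         \<le> 2 * (1 + \<alpha>) * (K + 1) * norm h powr (1 + \<alpha>)" for x h :: 'a
    by (rule psi_sd[OF Kh K al])
  show "\<exists>B. \<forall>h. norm h \<le> 1 \<longrightarrow> norm (x + h) powr (1 + \<alpha>) \<le> B" for x :: 'a
  proof (intro exI allI impI)
    fix h :: 'a assume "norm h \<le> 1"
    hence "norm (x + h) \<le> norm x + 1" by (smt (verit) norm_triangle_ineq)
    thus "norm (x + h) powr (1 + \<alpha>) \<le> (norm x + 1) powr (1 + \<alpha>)"
      using al by (intro powr_mono2) auto
  qed
qed

lemma smooth_K:
  assumes "smoothness_power_type \<alpha> TYPE('a::real_normed_vector)"
  obtains K where "K > 0" "\<And>t (x::'a) (h::'a). t > 0 \<Longrightarrow> norm x = 1 \<Longrightarrow> norm h = 1 \<Longrightarrow>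
        (norm (x + t *\<^sub>R h) + norm (x - t *\<^sub>R h)) / 2 - 1 \<le> K * t powr (1 + \<alpha>)"
  using assms unfolding smoothness_power_type_def by blast

lemma empty_case:
  assumes sm: "smoothness_power_type \<alpha> TYPE('a::real_normed_vector)" and al: "0 < \<alpha>" "\<alpha> \<le> 1"
  shows "\<exists>V::'a set. bounded V \<and> C1_alpha_body \<alpha> V"
proof -
  obtain K where K: "K > 0" and Kh: "\<And>t (x::'a) (h::'a). t > 0 \<Longrightarrow> norm x = 1 \<Longrightarrow> norm h = 1 \<Longrightarrow>
        (norm (x + t *\<^sub>R h) + norm (x - t *\<^sub>R h)) / 2 - 1 \<le> K * t powr (1 + \<alpha>)"
    using smooth_K[OF sm] by blast
  let ?G = "\<lambda>u::'a. norm u powr (1+\<alpha>)"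
  interpret P: semiconc ?G "2 * (1+\<alpha>) * (K + 1)" \<alpha> by (rule psi_semiconc[OF Kh K al])
  have bnd: "1 / 4 \<le> norm (P.DF z) \<and> norm (P.DF z) \<le> 4" if z: "?G z = 1" for z
  proof
    have "(norm z powr (1+\<alpha>)) powr (1/(1+\<alpha>)) = norm z" using al by (simp add: powr_powr)
    hence nz: "norm z = 1" using z by simp
    have "?G z + P.DF z (-z) \<le> ?G (z + - z)" by (rule P.sandwich(1))
    hence "1 \<le> P.DF z z" using z al by (simp add: blinfun.minus_right)
    also have "\<dots> \<le> norm (P.DF z) * norm z" using norm_blinfun[of "P.DF z" z] by simp
    finally show "1 / 4 \<le> norm (P.DF z)" using nz by simp
    show "norm (P.DF z) \<le> 4"
    proof (rule blinfun_norm_le)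
      fix h :: 'a assume h: "norm h \<le> 1"
      have "?G z + P.DF z h \<le> ?G (z + h)" by (rule P.sandwich(1))
      moreover have "norm (z + h) \<le> 2" using h nz by (smt (verit) norm_triangle_ineq)
      hence "?G (z + h) \<le> 2 powr (1+\<alpha>)" using al by (intro powr_mono2) auto
      moreover have "(2::real) powr (1+\<alpha>) \<le> 2 powr 2" using al by (intro powr_mono) auto
      ultimately show "P.DF z h \<le> 4" using z by simp
    qed
  qed
  have body: "C1_alpha_body \<alpha> {z. ?G z \<le> 1}"
    by (rule body_generic(1)[OF psi_convex[OF al(1)] P.C1 P.sandwich(1) _ _ bnd])
       (use al in \<open>auto intro: exI[of _ 0]\<close>)
  have "bounded {z. ?G z \<le> 1}"
  proof -
    have "{z. ?G z \<le> 1} \<subseteq> cball 0 1"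
    proof
      fix z assume "z \<in> {z. ?G z \<le> 1}"
      hence a: "norm z powr (1+\<alpha>) \<le> 1" by simp
      have "(norm z powr (1+\<alpha>)) powr (1/(1+\<alpha>)) \<le> 1 powr (1/(1+\<alpha>))"
        by (rule powr_mono2) (use al a in auto)
      hence "norm z \<le> 1" using al by (simp add: powr_powr)
      thus "z \<in> cball 0 1" by simp
    qed
    thus ?thesis using bounded_cball bounded_subset by blast
  qed
  thus ?thesis using body by blast
qed


lemma sum_lessThan_add_split:
  fixes n1 n2 :: nat shows "(\<Sum>i<n1+n2. f i) = (\<Sum>i<n1. f i) + (\<Sum>j<n2. f (n1 + j))"
  by (induction n2) (simp_all add: add.assoc)

lemma powr_lt_root:
  fixes r a \<alpha> :: real
  assumes "0 \<le> r" "r powr \<alpha> < a" "0 < \<alpha>"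
  shows "r < a powr (1/\<alpha>)"
proof -
  have "(r powr \<alpha>) powr (1/\<alpha>) < a powr (1/\<alpha>)"
    using assms by (intro powr_less_mono2) auto
  thus ?thesis using assms by (simp add: powr_powr)
qed

lemma young_ineq:
  fixes s r \<delta> \<alpha> :: real
  assumes "0 \<le> s" "0 \<le> r" "0 < \<delta>" "0 < \<alpha>"
  shows "s * r - \<delta> * s powr (1 + 1/\<alpha>) \<le> \<delta> powr (-\<alpha>) * r powr (1+\<alpha>)"
proof (cases "r \<le> \<delta> * s powr (1/\<alpha>)")
  case True
  have "s * r \<le> s * (\<delta> * s powr (1/\<alpha>))" using True assms by (intro mult_left_mono) auto
  also have "\<dots> = \<delta> * s powr (1 + 1/\<alpha>)"
    using assms by (cases "s = 0") (simp_all add: powr_add)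
  finally have "s * r \<le> \<delta> * s powr (1 + 1/\<alpha>)" .
  moreover have "0 \<le> \<delta> powr (-\<alpha>) * r powr (1+\<alpha>)" by simp
  ultimately show ?thesis by linarith
next
  case False
  hence "s powr (1/\<alpha>) < r / \<delta>" using assms by (simp add: field_simps)
  hence "s < (r/\<delta>) powr \<alpha>" using powr_lt_root[of s "1/\<alpha>" "r/\<delta>"] assms by simp
  hence "s * r \<le> (r/\<delta>) powr \<alpha> * r" using assms by (intro mult_right_mono) auto
  also have "\<dots> = \<delta> powr (-\<alpha>) * r powr (1+\<alpha>)"
  proof -
    have "(r/\<delta>) powr \<alpha> * r = r powr \<alpha> * r / \<delta> powr \<alpha>" using assms by (simp add: powr_divide)
    also have "\<dots> = \<delta> powr (-\<alpha>) * r powr (1+\<alpha>)"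
      using assms by (cases "r = 0") (simp_all add: powr_add powr_minus divide_inverse)
    finally show ?thesis .
  qed
  finally have "s * r \<le> \<delta> powr (-\<alpha>) * r powr (1+\<alpha>)" .
  moreover have "0 \<le> \<delta> * s powr (1 + 1/\<alpha>)" using assms by simp
  ultimately show ?thesis by linarith
qed

lemma lowb:
  fixes r M \<alpha> a :: real
  assumes "0 \<le> r" "0 < M" "0 < \<alpha>" "0 < a"
  shows "- r + M * r powr (1+\<alpha>) \<ge> (a - 1) * r - a * (a / M) powr (1/\<alpha>)"
proof (cases "a \<le> M * r powr \<alpha>")
  case True
  hence "a * r \<le> M * r powr \<alpha> * r" using assms by (intro mult_right_mono) auto
  also have "\<dots> = M * r powr (1+\<alpha>)" using assms by (cases "r = 0") (simp_all add: powr_add)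
  finally have "a * r \<le> M * r powr (1+\<alpha>)" .
  moreover have "0 \<le> a * (a / M) powr (1/\<alpha>)" using assms by simp
  ultimately show ?thesis by (simp add: algebra_simps)
next
  case False
  hence "r powr \<alpha> < a / M" using assms by (simp add: field_simps)
  hence "r < (a/M) powr (1/\<alpha>)" using powr_lt_root assms by blast
  moreover have "0 \<le> M * r powr (1+\<alpha>)" using assms by simp
  moreover have "a * r \<le> a * (a/M) powr (1/\<alpha>)" using calculation(1) assms by (intro mult_left_mono) auto
  ultimately show ?thesis by (simp add: algebra_simps)
qed

locale constr =
  fixes \<alpha> \<delta> K :: real and C :: "'a::real_normed_vector set" and D :: "'a \<Rightarrow> ('a \<Rightarrow>\<^sub>L real)"
  assumes al: "0 < \<alpha>" "\<alpha> \<le> 1" and dl: "0 < \<delta>" and K: "0 < K"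
    and Kh: "\<And>t (x::'a) (h::'a). t > 0 \<Longrightarrow> norm x = 1 \<Longrightarrow> norm h = 1 \<Longrightarrow>
        (norm (x + t *\<^sub>R h) + norm (x - t *\<^sub>R h)) / 2 - 1 \<le> K * t powr (1 + \<alpha>)"
    and Cne: "C \<noteq> {}"
    and Dn: "\<And>x. x \<in> C \<Longrightarrow> norm (D x) = 1"
    and cond: "\<And>x y. x \<in> C \<Longrightarrow> y \<in> C \<Longrightarrow> D y (y - x) \<ge> \<delta> * norm (D x - D y) powr (1 + 1/\<alpha>)"
begin

abbreviation psi :: "'a \<Rightarrow> real" where "psi u \<equiv> norm u powr (1+\<alpha>)"
definition M where "M = \<delta> powr (-\<alpha>)"
definition c0 where "c0 = (1/M) powr (1/\<alpha>)"
definition Cp where "Cp = 2 * (1+\<alpha>) * (K + 1)"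

lemma M: "0 < M" using dl by (simp add: M_def)
lemma Cp: "0 < Cp" using al K by (simp add: Cp_def)

lemma Dabs: "x \<in> C \<Longrightarrow> \<bar>D x v\<bar> \<le> norm v"
  using norm_blinfun[of "D x" v] Dn[of x] by simp

lemma young: "x \<in> C \<Longrightarrow> y \<in> C \<Longrightarrow> D x (z - x) \<le> D y (z - y) + M * psi (z - y)"
proof -
  assume x: "x \<in> C" and y: "y \<in> C"
  define s where "s = norm (D x - D y)"
  define r where "r = norm (z - y)"
  have e: "D x (z - x) - D y (z - y) = (D x - D y) (z - y) + D x (y - x)"
    by (simp add: blinfun.diff_left blinfun.diff_right algebra_simps)
  have 1: "(D x - D y) (z - y) \<le> s * r"
    using norm_blinfun[of "D x - D y" "z - y"] by (simp add: s_def r_def)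
  have "\<delta> * norm (D y - D x) powr (1 + 1/\<alpha>) \<le> D x (x - y)" by (rule cond[OF y x])
  hence 2: "D x (y - x) \<le> - \<delta> * s powr (1 + 1/\<alpha>)"
    by (simp add: s_def norm_minus_commute blinfun.diff_right)
  have "s * r - \<delta> * s powr (1 + 1/\<alpha>) \<le> M * r powr (1+\<alpha>)"
    unfolding M_def by (rule young_ineq) (use dl al in \<open>auto simp: s_def r_def\<close>)
  thus ?thesis using e 1 2 by (simp add: r_def)
qed

definition val1 where "val1 z y = D y (z - y) + M * psi (z - y)"

lemma val1_low: "y \<in> C \<Longrightarrow> val1 z y \<ge> - c0"
proof -
  assume y: "y \<in> C"
  have "- norm (z - y) + M * psi (z - y) \<ge> (1 - 1) * norm (z - y) - 1 * (1/M) powr (1/\<alpha>)"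
    by (rule lowb) (use M al in auto)
  moreover have "D y (z - y) \<ge> - norm (z - y)" using Dabs[OF y, of "z - y"] by simp
  ultimately show ?thesis by (simp add: val1_def c0_def)
qed

lemma val1_low2: "y \<in> C \<Longrightarrow> val1 z y \<ge> norm (z - y) - 2 * (2/M) powr (1/\<alpha>)"
proof -
  assume y: "y \<in> C"
  have "- norm (z - y) + M * psi (z - y) \<ge> (2 - 1) * norm (z - y) - 2 * (2/M) powr (1/\<alpha>)"
    by (rule lowb) (use M al in auto)
  moreover have "D y (z - y) \<ge> - norm (z - y)" using Dabs[OF y, of "z - y"] by simp
  ultimately show ?thesis by (simp add: val1_def)
qed

definition g where "g z = Inf (val1 z ` C)"

lemma bdd_val1: "bdd_below (val1 z ` C)"
  by (rule bdd_belowI2[of _ "- c0"]) (rule val1_low)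

lemma g_le: "y \<in> C \<Longrightarrow> g z \<le> val1 z y"
  unfolding g_def by (rule cINF_lower[OF bdd_val1])

lemma g_ge: "g z \<ge> - c0"
  unfolding g_def using Cne by (intro cINF_greatest val1_low) auto

lemma g_ge_aff: "x \<in> C \<Longrightarrow> D x (z - x) \<le> g z"
  unfolding g_def using Cne by (intro cINF_greatest) (auto simp: val1_def intro: young)

lemma g_approx: "0 < e \<Longrightarrow> \<exists>y\<in>C. val1 z y < g z + e"
proof (rule ccontr)
  assume e: "0 < e" and "\<not> (\<exists>y\<in>C. val1 z y < g z + e)"
  hence "\<forall>y\<in>C. g z + e \<le> val1 z y" by auto
  hence "g z + e \<le> g z" unfolding g_def using Cne by (intro cINF_greatest) auto
  thus False using e by simp
qed

lemma g_sd: "g (x + h) + g (x - h) - 2 * g x \<le> M * Cp * psi h"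
proof -
  have *: "g (x + h) + g (x - h) \<le> 2 * g x + M * Cp * psi h + 2 * e" if e: "0 < e" for e
  proof -
    obtain y where y: "y \<in> C" "val1 x y < g x + e" using g_approx[OF e] by blast
    have 1: "g (x + h) \<le> val1 (x + h) y" by (rule g_le[OF y(1)])
    have 2: "g (x - h) \<le> val1 (x - h) y" by (rule g_le[OF y(1)])
    have e1: "x + h - y = (x - y) + h" "x - h - y = (x - y) - h" by (simp_all add: algebra_simps)
    have a: "val1 (x + h) y = D y (x - y) + D y h + M * psi ((x - y) + h)"
      unfolding val1_def e1 by (simp only: blinfun.add_right)
    have b: "val1 (x - h) y = D y (x - y) - D y h + M * psi ((x - y) - h)"
      unfolding val1_def e1 by (simp only: blinfun.diff_right)
    have c: "val1 x y = D y (x - y) + M * psi (x - y)" by (simp only: val1_def)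
    have 3: "psi ((x - y) + h) + psi ((x - y) - h) - 2 * psi (x - y) \<le> Cp * psi h"
      using psi_sd[OF Kh K al, of "x - y" h] unfolding Cp_def .
    have 4: "M * (psi ((x - y) + h) + psi ((x - y) - h) - 2 * psi (x - y)) \<le> M * (Cp * psi h)"
      by (rule mult_left_mono[OF 3]) (use M in simp)
    have 5: "M * psi ((x - y) + h) + M * psi ((x - y) - h) \<le> 2 * (M * psi (x - y)) + M * Cp * psi h"
      using 4 by (simp only: right_diff_distrib distrib_left mult.assoc mult.left_commute[of M 2])
    show ?thesis using 1 2 a b c 5 y(2) by linarith
  qed
  show ?thesis
  proof (rule field_le_epsilon)
    fix e :: real assume "0 < e"
    hence "0 < e/2" by simp
    from this[THEN *] show "g (x + h) + g (x - h) - 2 * g x \<le> M * Cp * psi h + e" by simp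
  qed
qed

end


lemma sum_if_split:
  fixes m k :: nat and A B :: "nat \<Rightarrow> 'b::comm_monoid_add"
  shows "(\<Sum>i<m+k. if i < m then A i else B (i - m)) = (\<Sum>i<m. A i) + (\<Sum>j<k. B j)"
  by (simp add: sum_lessThan_add_split)

definition rep :: "'a::real_vector \<Rightarrow> nat \<Rightarrow> (nat \<Rightarrow> real) \<Rightarrow> (nat \<Rightarrow> 'a) \<Rightarrow> bool" where
  "rep z n l xs \<longleftrightarrow> (\<forall>i<n. 0 \<le> l i) \<and> (\<Sum>i<n. l i) = 1 \<and> (\<Sum>i<n. l i *\<^sub>R xs i) = z"

context constr begin
definition val where "val n l xs = (\<Sum>i<n. l i * g (xs i))"
definition FF where "FF z = Inf {val n l xs | n l xs. rep z n l xs}"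

lemma rep1: "rep z 1 (\<lambda>_. 1) (\<lambda>_. z)" by (simp add: rep_def lessThan_Suc One_nat_def)

lemma val_low: "rep z n l xs \<Longrightarrow> - c0 \<le> val n l xs"
proof -
  assume r: "rep z n l xs"
  have "(\<Sum>i<n. l i * (- c0)) \<le> (\<Sum>i<n. l i * g (xs i))"
    using r g_ge by (intro sum_mono mult_left_mono) (auto simp: rep_def)
  also have "(\<Sum>i<n. l i * (- c0)) = (\<Sum>i<n. l i) * (- c0)" by (rule sum_distrib_right[symmetric])
  also have "\<dots> = - c0" using r by (simp add: rep_def)
  finally show ?thesis by (simp add: val_def)
qed

lemma val_aff: "x \<in> C \<Longrightarrow> rep z n l xs \<Longrightarrow> D x (z - x) \<le> val n l xs"
proof -
  assume x: "x \<in> C" and r: "rep z n l xs"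
  have "(\<Sum>i<n. l i * D x (xs i - x)) \<le> (\<Sum>i<n. l i * g (xs i))"
    using r g_ge_aff[OF x] by (intro sum_mono mult_left_mono) (auto simp: rep_def)
  also have "(\<Sum>i<n. l i * D x (xs i - x)) = D x (\<Sum>i<n. l i *\<^sub>R (xs i - x))"
    by (simp add: blinfun.sum_right blinfun.scaleR_right)
  also have "(\<Sum>i<n. l i *\<^sub>R (xs i - x)) = z - x"
    using r by (simp add: rep_def scaleR_right_diff_distrib sum_subtractf scaleR_sum_left[symmetric])
  finally show ?thesis by (simp add: val_def)
qed

lemma Sne: "{val n l xs | n l xs. rep z n l xs} \<noteq> {}" using rep1 by blast
lemma Sbdd: "bdd_below {val n l xs | n l xs. rep z n l xs}"
  by (rule bdd_belowI[of _ "- c0"]) (auto intro: val_low)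

lemma FF_le: "rep z n l xs \<Longrightarrow> FF z \<le> val n l xs"
  unfolding FF_def by (rule cInf_lower[OF _ Sbdd]) blast

lemma FF_ge: "- c0 \<le> FF z"
  unfolding FF_def by (rule cInf_greatest[OF Sne]) (auto intro: val_low)

lemma FF_aff: "x \<in> C \<Longrightarrow> D x (z - x) \<le> FF z"
  unfolding FF_def by (rule cInf_greatest[OF Sne]) (auto intro: val_aff)

lemma FF_le_g: "FF z \<le> g z"
  using FF_le[OF rep1] by (simp add: val_def)

lemma FF_approx: "0 < e \<Longrightarrow> \<exists>n l xs. rep z n l xs \<and> val n l xs < FF z + e"
proof (rule ccontr)
  assume e: "0 < e" and "\<not> (\<exists>n l xs. rep z n l xs \<and> val n l xs < FF z + e)"
  hence "\<forall>v\<in>{val n l xs | n l xs. rep z n l xs}. FF z + e \<le> v" by force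
  hence "FF z + e \<le> FF z" unfolding FF_def by (intro cInf_greatest[OF Sne]) (auto simp: FF_def)
  thus False using e by simp
qed

lemma rep_shift: "rep z n l xs \<Longrightarrow> rep (z + h) n l (\<lambda>i. xs i + h)"
  by (simp add: rep_def scaleR_right_distrib sum.distrib scaleR_sum_left[symmetric])

lemma rep_comb:
  assumes r1: "rep z1 n1 l1 x1" and r2: "rep z2 n2 l2 x2" and t: "0 \<le> t" "t \<le> 1"
  shows "rep ((1 - t) *\<^sub>R z1 + t *\<^sub>R z2) (n1 + n2)
           (\<lambda>i. if i < n1 then (1 - t) * l1 i else t * l2 (i - n1))
           (\<lambda>i. if i < n1 then x1 i else x2 (i - n1))"
    and "val (n1 + n2) (\<lambda>i. if i < n1 then (1 - t) * l1 i else t * l2 (i - n1))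
           (\<lambda>i. if i < n1 then x1 i else x2 (i - n1)) = (1 - t) * val n1 l1 x1 + t * val n2 l2 x2"
proof -
  let ?L = "\<lambda>i. if i < n1 then (1 - t) * l1 i else t * l2 (i - n1)"
  let ?X = "\<lambda>i. if i < n1 then x1 i else x2 (i - n1)"
  have a: "(\<Sum>i<n1+n2. ?L i) = (\<Sum>i<n1. (1 - t) * l1 i) + (\<Sum>j<n2. t * l2 j)"
    by (rule sum_if_split)
  have b: "(\<Sum>i<n1+n2. ?L i *\<^sub>R ?X i) = (\<Sum>i<n1. ((1 - t) * l1 i) *\<^sub>R x1 i) + (\<Sum>j<n2. (t * l2 j) *\<^sub>R x2 j)"
    using sum_if_split[where m=n1 and k=n2 and A="\<lambda>i. ((1 - t) * l1 i) *\<^sub>R x1 i" and B="\<lambda>j. (t * l2 j) *\<^sub>R x2 j"]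
    by (simp add: if_distrib if_distribR cong: if_cong)
  have c: "(\<Sum>i<n1+n2. ?L i * g (?X i)) = (\<Sum>i<n1. (1 - t) * l1 i * g (x1 i)) + (\<Sum>j<n2. t * l2 j * g (x2 j))"
    using sum_if_split[where m=n1 and k=n2 and A="\<lambda>i. (1 - t) * l1 i * g (x1 i)" and B="\<lambda>j. t * l2 j * g (x2 j)"]
    by (simp add: if_distrib if_distribR cong: if_cong)
  show "rep ((1 - t) *\<^sub>R z1 + t *\<^sub>R z2) (n1 + n2) ?L ?X"
    unfolding rep_def
  proof (intro conjI allI impI)
    fix i assume "i < n1 + n2"
    thus "0 \<le> ?L i" using r1 r2 t by (auto simp: rep_def)
  next
    show "(\<Sum>i<n1+n2. ?L i) = 1" unfolding a using r1 r2
      by (simp add: rep_def sum_distrib_left[symmetric])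
  next
    show "(\<Sum>i<n1+n2. ?L i *\<^sub>R ?X i) = (1 - t) *\<^sub>R z1 + t *\<^sub>R z2" unfolding b using r1 r2
      by (simp add: rep_def scaleR_sum_right[symmetric] scaleR_scaleR[symmetric] del: scaleR_scaleR)
  qed
  show "val (n1 + n2) ?L ?X = (1 - t) * val n1 l1 x1 + t * val n2 l2 x2"
    unfolding val_def c by (simp add: sum_distrib_left mult.assoc)
qed

lemma FF_convex: "convex_on UNIV FF"
proof (rule convex_onI)
  fix t :: real and z1 z2 :: 'a assume t: "0 < t" "t < 1"
  show "FF ((1 - t) *\<^sub>R z1 + t *\<^sub>R z2) \<le> (1 - t) * FF z1 + t * FF z2"
  proof (rule field_le_epsilon)
    fix e :: real assume e: "0 < e"
    obtain n1 l1 x1 where r1: "rep z1 n1 l1 x1" "val n1 l1 x1 < FF z1 + e" using FF_approx[OF e] by blast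
    obtain n2 l2 x2 where r2: "rep z2 n2 l2 x2" "val n2 l2 x2 < FF z2 + e" using FF_approx[OF e] by blast
    have "FF ((1 - t) *\<^sub>R z1 + t *\<^sub>R z2) \<le> (1 - t) * val n1 l1 x1 + t * val n2 l2 x2"
      using FF_le[OF rep_comb(1)[OF r1(1) r2(1)]] rep_comb(2)[OF r1(1) r2(1)] t by simp
    also have "\<dots> \<le> (1 - t) * (FF z1 + e) + t * (FF z2 + e)"
      using r1 r2 t by (intro add_mono mult_left_mono) auto
    also have "\<dots> = (1 - t) * FF z1 + t * FF z2 + e" by (simp add: algebra_simps)
    finally show "FF ((1 - t) *\<^sub>R z1 + t *\<^sub>R z2) \<le> (1 - t) * FF z1 + t * FF z2 + e" .
  qed
qed simp

lemma FF_sd: "FF (x + h) + FF (x - h) - 2 * FF x \<le> M * Cp * psi h"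
proof (rule field_le_epsilon)
  fix e :: real assume e: "0 < e"
  obtain n l xs where r: "rep x n l xs" "val n l xs < FF x + e/2" using FF_approx[where e="e/2" and z=x] e by auto
  have l0: "\<And>i. i < n \<Longrightarrow> 0 \<le> l i" and l1: "(\<Sum>i<n. l i) = 1" using r(1) by (auto simp: rep_def)
  have "FF (x + h) \<le> val n l (\<lambda>i. xs i + h)" by (rule FF_le[OF rep_shift[OF r(1)]])
  moreover have "FF (x - h) \<le> val n l (\<lambda>i. xs i + (- h))"
    using FF_le[OF rep_shift[OF r(1), of "- h"]] by simp
  moreover have "val n l (\<lambda>i. xs i + h) + val n l (\<lambda>i. xs i + (- h)) \<le> 2 * val n l xs + M * Cp * psi h"
  proof -
    have "val n l (\<lambda>i. xs i + h) + val n l (\<lambda>i. xs i + (- h)) = (\<Sum>i<n. l i * (g (xs i + h) + g (xs i - h)))"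
      by (simp add: val_def sum.distrib[symmetric] distrib_left)
    also have "\<dots> \<le> (\<Sum>i<n. l i * (2 * g (xs i) + M * Cp * psi h))"
    proof (intro sum_mono mult_left_mono)
      fix i assume "i \<in> {..<n}"
      thus "0 \<le> l i" using l0 by simp
      show "g (xs i + h) + g (xs i - h) \<le> 2 * g (xs i) + M * Cp * psi h"
        using g_sd[of "xs i" h] by linarith
    qed
    also have "\<dots> = 2 * val n l xs + M * Cp * psi h"
    proof -
      have "(\<Sum>i<n. l i * (2 * g (xs i) + M * Cp * psi h)) = (\<Sum>i<n. 2 * (l i * g (xs i)) + l i * (M * Cp * psi h))"
        by (simp add: distrib_left mult.left_commute)
      also have "\<dots> = 2 * (\<Sum>i<n. l i * g (xs i)) + (\<Sum>i<n. l i) * (M * Cp * psi h)"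
        by (simp add: sum.distrib sum_distrib_left sum_distrib_right)
      finally show ?thesis by (simp add: l1 val_def)
    qed
    finally show ?thesis .
  qed
  ultimately show "FF (x + h) + FF (x - h) - 2 * FF x \<le> M * Cp * psi h + e" using r(2) by linarith
qed

lemma FF_bd: "\<exists>B. \<forall>h. norm h \<le> 1 \<longrightarrow> FF (x + h) \<le> B"
proof -
  obtain y0 where y0: "y0 \<in> C" using Cne by blast
  show ?thesis
  proof (intro exI allI impI)
    fix h :: 'a assume h: "norm h \<le> 1"
    have n: "norm (x + h - y0) \<le> norm (x - y0) + 1"
      using norm_triangle_ineq[of "x - y0" h] h by (simp add: algebra_simps)
    have "FF (x + h) \<le> val1 (x + h) y0" using FF_le_g g_le[OF y0] order_trans by blast
    also have "\<dots> \<le> norm (x + h - y0) + M * psi (x + h - y0)"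
      using Dabs[OF y0, of "x + h - y0"] by (simp add: val1_def)
    also have "\<dots> \<le> (norm (x - y0) + 1) + M * (norm (x - y0) + 1) powr (1+\<alpha>)"
      using n M al by (intro add_mono mult_left_mono powr_mono2) auto
    finally show "FF (x + h) \<le> (norm (x - y0) + 1) + M * (norm (x - y0) + 1) powr (1+\<alpha>)" .
  qed
qed

lemma FF_semiconc: "semiconc FF (M * Cp) \<alpha>"
  by unfold_locales (use al FF_convex FF_sd FF_bd in auto)

end


lemma norm_comb:
  fixes a :: "nat \<Rightarrow> 'a::real_normed_vector"
  assumes "\<And>i. i < n \<Longrightarrow> 0 \<le> l i"
  shows "norm (\<Sum>i<n. l i *\<^sub>R a i) \<le> (\<Sum>i<n. l i * norm (a i))"
proof -
  have "norm (\<Sum>i<n. l i *\<^sub>R a i) \<le> (\<Sum>i<n. norm (l i *\<^sub>R a i))" by (rule norm_sum)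
  also have "\<dots> = (\<Sum>i<n. l i * norm (a i))" using assms by (intro sum.cong) auto
  finally show ?thesis .
qed

context constr begin

sublocale S: semiconc FF "M * Cp" \<alpha> by (rule FF_semiconc)

definition r0 where "r0 = (1 / (4 * M)) powr (1/\<alpha>)"
definition \<kappa> where "\<kappa> = r0 / 4"
definition c2 where "c2 = 2 * (2/M) powr (1/\<alpha>)"
definition R where "R = 2 + c2 + r0"

lemma r0: "0 < r0" using M by (simp add: r0_def)
lemma \<kappa>: "0 < \<kappa>" using r0 by (simp add: \<kappa>_def)
lemma c2: "0 \<le> c2" by (simp add: c2_def)
lemma R: "0 < R" using r0 c2 by (simp add: R_def)
lemma Mr0: "M * r0 powr (1+\<alpha>) = r0 / 4"
proof -
  have "r0 powr \<alpha> = 1 / (4 * M)" using M al by (simp add: r0_def powr_powr)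
  thus ?thesis using r0 M by (simp add: powr_add)
qed

lemma FF_C: "x \<in> C \<Longrightarrow> FF x = 0"
proof -
  assume x: "x \<in> C"
  have "D x (x - x) \<le> FF x" by (rule FF_aff[OF x])
  moreover have "FF x \<le> val1 x x" using FF_le_g g_le[OF x] order_trans by blast
  ultimately show ?thesis by (simp add: val1_def)
qed

lemma DF_C: "x \<in> C \<Longrightarrow> S.DF x = D x"
proof -
  assume x: "x \<in> C"
  have est: "\<bar>(S.DF x - D x) h\<bar> \<le> (M + M * Cp) * psi h" for h
  proof -
    have a: "S.DF x h \<le> FF (x + h) - FF x" using S.sandwich(1)[of x h] by simp
    have b: "FF (x + h) \<le> D x h + M * psi h"
      using FF_le_g[of "x + h"] g_le[OF x, of "x + h"] by (simp add: val1_def)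
    have c: "D x h \<le> FF (x + h)" using FF_aff[OF x, of "x + h"] by simp
    have d: "FF (x + h) \<le> FF x + S.DF x h + M * Cp * psi h" by (rule S.sandwich(2))
    have "0 \<le> M * Cp * psi h" using M Cp by simp
    thus ?thesis using a b c d FF_C[OF x] by (simp add: blinfun.diff_left abs_le_iff algebra_simps)
  qed
  show ?thesis
  proof (rule blinfun_eqI)
    fix u
    let ?a = "(S.DF x - D x) u"
    have "\<bar>?a\<bar> \<le> 0"
    proof (rule small_le[OF al(1)])
      fix t :: real assume t: "0 < t" "t \<le> 1"
      have "\<bar>(S.DF x - D x) (t *\<^sub>R u)\<bar> \<le> (M + M * Cp) * psi (t *\<^sub>R u)" by (rule est)
      also have "psi (t *\<^sub>R u) = t * (t powr \<alpha> * norm u powr (1+\<alpha>))"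
        using t by (simp add: powr_mult powr_add)
      finally have "t * \<bar>?a\<bar> \<le> t * ((M + M * Cp) * norm u powr (1+\<alpha>) * t powr \<alpha>)"
        using t by (simp add: blinfun.scaleR_right abs_mult mult_ac)
      thus "\<bar>?a\<bar> \<le> ((M + M * Cp) * norm u powr (1+\<alpha>)) * t powr \<alpha>" using t by simp
    qed
    thus "S.DF x u = D x u" by (simp add: blinfun.diff_left)
  qed
qed

lemma deep:
  assumes z: "FF z \<le> 0"
  shows "\<exists>w v. norm (w - z) \<le> R \<and> FF w \<le> - \<kappa> \<and> norm (z - v) \<le> R \<and>
              (\<forall>B. (\<forall>y\<in>C. norm y \<le> B) \<longrightarrow> norm v \<le> B)"
proof -
  obtain n l xs where r: "rep z n l xs" "val n l xs < FF z + 1" using FF_approx[where e=1 and z=z] by auto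
  have l0: "\<And>i. i < n \<Longrightarrow> 0 \<le> l i" and l1: "(\<Sum>i<n. l i) = 1" and lz: "(\<Sum>i<n. l i *\<^sub>R xs i) = z"
    using r(1) by (auto simp: rep_def)
  have "\<forall>i. \<exists>y. i < n \<longrightarrow> y \<in> C \<and> val1 (xs i) y < g (xs i) + 1"
    using g_approx[of 1] by auto
  then obtain ys where ys: "\<And>i. i < n \<Longrightarrow> ys i \<in> C \<and> val1 (xs i) (ys i) < g (xs i) + 1"
    by metis
  have "\<forall>i. \<exists>u. i < n \<longrightarrow> norm u = 1 \<and> 1/2 \<le> D (ys i) u"
  proof
    fix i show "\<exists>u. i < n \<longrightarrow> norm u = 1 \<and> 1/2 \<le> D (ys i) u"
    proof (cases "i < n")
      case True
      hence n1: "norm (D (ys i)) = 1" using ys Dn by blast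
      hence "D (ys i) \<noteq> 0" by auto
      thus ?thesis using blinfun_unit_half[of "D (ys i)"] n1 by auto
    qed auto
  qed
  then obtain us where us: "\<And>i. i < n \<Longrightarrow> norm (us i) = 1 \<and> 1/2 \<le> D (ys i) (us i)" by metis
  define ws where "ws i = ys i - r0 *\<^sub>R us i" for i
  define w where "w = (\<Sum>i<n. l i *\<^sub>R ws i)"
  define v where "v = (\<Sum>i<n. l i *\<^sub>R ys i)"
  have gws: "g (ws i) \<le> - \<kappa>" if i: "i < n" for i
  proof -
    have "g (ws i) \<le> val1 (ws i) (ys i)" using g_le ys[OF i] by blast
    also have "val1 (ws i) (ys i) = - r0 * D (ys i) (us i) + M * r0 powr (1+\<alpha>)"
      using us[OF i] r0 by (simp add: val1_def ws_def blinfun.minus_right blinfun.scaleR_right)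
    also have "\<dots> \<le> - r0 * (1/2) + r0 / 4"
      unfolding Mr0 using us[OF i] r0 by (intro add_mono) auto
    finally show ?thesis by (simp add: \<kappa>_def)
  qed
  have Fw: "FF w \<le> - \<kappa>"
  proof -
    have "rep w n l ws" using l0 l1 by (simp add: rep_def w_def)
    hence "FF w \<le> val n l ws" by (rule FF_le)
    also have "\<dots> \<le> (\<Sum>i<n. l i * (- \<kappa>))"
      unfolding val_def using l0 gws by (intro sum_mono mult_left_mono) auto
    also have "\<dots> = (\<Sum>i<n. l i) * (- \<kappa>)" by (rule sum_distrib_right[symmetric])
    finally show ?thesis using l1 by simp
  qed
  define rr where "rr i = norm (xs i - ys i)" for i
  have rr: "rr i \<le> g (xs i) + 1 + c2" if i: "i < n" for i
    using val1_low2[of "ys i" "xs i"] ys[OF i] by (simp add: rr_def c2_def)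
  have sumrr: "(\<Sum>i<n. l i * rr i) \<le> 2 + c2"
  proof -
    have "(\<Sum>i<n. l i * rr i) \<le> (\<Sum>i<n. l i * (g (xs i) + (1 + c2)))"
      using l0 rr by (intro sum_mono mult_left_mono) (auto simp: add.assoc)
    also have "\<dots> = val n l xs + (1 + c2)"
      using l1 by (simp add: val_def distrib_left sum.distrib sum_distrib_right[symmetric])
    finally show ?thesis using r(2) z by simp
  qed
  have "w - z = (\<Sum>i<n. l i *\<^sub>R (ws i - xs i))"
    by (simp add: w_def lz[symmetric] scaleR_right_diff_distrib sum_subtractf)
  hence "norm (w - z) \<le> (\<Sum>i<n. l i * norm (ws i - xs i))" using norm_comb l0 by metis
  also have "\<dots> \<le> (\<Sum>i<n. l i * (rr i + r0))"
  proof (intro sum_mono mult_left_mono)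
    fix i assume i: "i \<in> {..<n}"
    have "ws i - xs i = - (xs i - ys i) - r0 *\<^sub>R us i" by (simp add: ws_def)
    hence "norm (ws i - xs i) \<le> norm (xs i - ys i) + norm (r0 *\<^sub>R us i)"
      by (metis norm_minus_cancel norm_triangle_ineq4)
    thus "norm (ws i - xs i) \<le> rr i + r0" using us i r0 by (simp add: rr_def)
  qed (use l0 in auto)
  also have "\<dots> = (\<Sum>i<n. l i * rr i) + r0"
    using l1 by (simp add: distrib_left sum.distrib sum_distrib_right[symmetric])
  finally have nw: "norm (w - z) \<le> R" using sumrr by (simp add: R_def)
  have "z - v = (\<Sum>i<n. l i *\<^sub>R (xs i - ys i))"
    by (simp add: v_def lz[symmetric] scaleR_right_diff_distrib sum_subtractf)
  hence "norm (z - v) \<le> (\<Sum>i<n. l i * rr i)" using norm_comb[of n l] l0 by (simp add: rr_def)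
  hence nv: "norm (z - v) \<le> R" using sumrr r0 by (simp add: R_def)
  have bv: "norm v \<le> B" if B: "\<forall>y\<in>C. norm y \<le> B" for B
  proof -
    have "norm v \<le> (\<Sum>i<n. l i * norm (ys i))" unfolding v_def by (rule norm_comb[OF l0])
    also have "\<dots> \<le> (\<Sum>i<n. l i * B)" using l0 ys B by (intro sum_mono mult_left_mono) auto
    also have "\<dots> = B" using l1 by (simp add: sum_distrib_right[symmetric])
    finally show ?thesis .
  qed
  show ?thesis using nw Fw nv bv by blast
qed

lemma DF_bounds:
  assumes z: "FF z = 0"
  shows "\<kappa> / R \<le> norm (S.DF z)" "norm (S.DF z) \<le> c0 + M * Cp"
proof -
  obtain w where w: "norm (w - z) \<le> R" "FF w \<le> - \<kappa>" using deep z by force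
  have "FF z + S.DF z (w - z) \<le> FF (z + (w - z))" by (rule S.sandwich(1))
  hence "\<kappa> \<le> - S.DF z (w - z)" using z w by simp
  also have "\<dots> \<le> norm (S.DF z) * norm (w - z)"
    using norm_blinfun[of "S.DF z" "w - z"] by (simp add: abs_le_iff)
  also have "\<dots> \<le> norm (S.DF z) * R" using w by (intro mult_left_mono) auto
  finally show "\<kappa> / R \<le> norm (S.DF z)" using R by (simp add: field_simps)
  show "norm (S.DF z) \<le> c0 + M * Cp"
  proof (rule blinfun_norm_le)
    fix h :: 'a assume h: "norm h \<le> 1"
    have "FF (z + - h) \<le> FF z + S.DF z (- h) + M * Cp * psi (- h)" by (rule S.sandwich(2))
    moreover have "psi (- h) \<le> 1" using h al by (simp add: powr_le1)
    hence "M * Cp * psi (- h) \<le> M * Cp" using M Cp by (simp add: mult_left_le)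
    moreover have "- c0 \<le> FF (z + - h)" by (rule FF_ge)
    ultimately show "S.DF z h \<le> c0 + M * Cp" using z by (simp add: blinfun.minus_right)
  qed
qed

end


context constr begin

lemma construct: "\<exists>V. supporting_body \<alpha> C D V \<and> (bounded C \<longrightarrow> bounded V)"
proof -
  let ?G = "\<lambda>z. FF z + 1"
  define V where "V = {z. ?G z \<le> 1}"
  define Mb where "Mb = R / \<kappa> + c0 + M * Cp"
  have c0: "0 < c0" using M by (simp add: c0_def)
  have Mb: "0 < Mb"
  proof -
    have "0 < R / \<kappa>" using R \<kappa> by simp
    moreover have "0 < M * Cp" using M Cp by simp
    ultimately show ?thesis using c0 by (simp add: Mb_def)
  qed
  have cvx: "convex_on UNIV ?G" by (intro convex_on_add FF_convex) (simp add: convex_on_const)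
  have C1G: "C1_alpha_with \<alpha> ?G S.DF"
    using S.C1 unfolding C1_alpha_with_def by (auto intro: has_derivative_add_const)
  have low: "?G x + S.DF x h \<le> ?G (x + h)" for x h using S.sandwich(1)[of x h] by simp
  obtain x0 where x0: "x0 \<in> C" using Cne by blast
  obtain w0 where "FF w0 \<le> - \<kappa>" using deep[of x0] FF_C[OF x0] by auto
  hence ex: "\<exists>z. ?G z < 1" using \<kappa> by (intro exI[of _ w0]) simp
  have bnds: "1 / Mb \<le> norm (S.DF z) \<and> norm (S.DF z) \<le> Mb" if "?G z = 1" for z
  proof -
    have z: "FF z = 0" using that by simp
    have "R / \<kappa> \<le> Mb" using c0 M Cp by (simp add: Mb_def)
    hence "inverse Mb \<le> inverse (R / \<kappa>)" using R \<kappa> by (intro le_imp_inverse_le) auto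
    hence "1 / Mb \<le> 1 / (R / \<kappa>)" by (simp add: inverse_eq_divide)
    also have "\<dots> = \<kappa> / R" by simp
    also have "\<dots> \<le> norm (S.DF z)" by (rule DF_bounds(1)[OF z])
    finally have 1: "1 / Mb \<le> norm (S.DF z)" .
    have "0 < R / \<kappa>" using R \<kappa> by simp
    hence "norm (S.DF z) \<le> Mb" using DF_bounds(2)[OF z] by (simp add: Mb_def)
    thus ?thesis using 1 by simp
  qed
  have body: "C1_alpha_body \<alpha> V" unfolding V_def by (rule body_generic(1)[OF cvx C1G low ex Mb bnds])
  have fr: "frontier V = {z. FF z = 0}" unfolding V_def using body_generic(2)[OF cvx C1G low ex Mb bnds] by simp
  have tang: "tangent_at (hyperplane_at D x) (frontier V) x" if x: "x \<in> C" for x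
  proof -
    have Fx: "FF x = 0" by (rule FF_C[OF x])
    have Dx: "S.DF x = D x" by (rule DF_C[OF x])
    have nD: "norm (D x) = 1" by (rule Dn[OF x])
    obtain e where e: "D x e = 1" "norm e \<le> 2 / norm (D x)"
      using blinfun_exists_one[of "D x"] nD by force
    have ne: "norm e \<le> 2" using e nD by simp
    let ?H = "hyperplane_at D x"
    have est: "infdist y ?H / norm (y - x) \<le> (2 * (M * Cp)) * norm (y - x) powr \<alpha>"
      if y: "y \<in> frontier V" "y \<noteq> x" for y
    proof -
      have Fy: "FF y = 0" using y fr by simp
      have a: "D x (y - x) \<le> 0" using S.sandwich(1)[of x "y - x"] Fx Fy Dx by simp
      have b: "- D x (y - x) \<le> M * Cp * psi (y - x)" using S.sandwich(2)[of x "y - x"] Fx Fy Dx by simp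
      define y' where "y' = y - (D x (y - x)) *\<^sub>R e"
      have y'H: "y' \<in> ?H" using e by (simp add: hyperplane_at_def y'_def blinfun.diff_right blinfun.scaleR_right)
      have "infdist y ?H \<le> dist y y'" by (rule infdist_le[OF y'H])
      also have "dist y y' = \<bar>D x (y - x)\<bar> * norm e" by (simp add: y'_def dist_norm)
      also have "\<dots> \<le> (M * Cp * psi (y - x)) * 2"
        using a b ne by (intro mult_mono) auto
      finally have "infdist y ?H \<le> 2 * (M * Cp) * psi (y - x)" by simp
      moreover have n: "norm (y - x) > 0" using y by simp
      moreover have "psi (y - x) = norm (y - x) * norm (y - x) powr \<alpha>" using n by (simp add: powr_add)
      ultimately show ?thesis using n by (simp add: divide_simps mult_ac)
    qed
    show ?thesis unfolding tangent_at_def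
    proof (intro conjI)
      show "x \<in> frontier V" using fr Fx by simp
      show "x \<in> ?H" by (simp add: hyperplane_at_def)
      show "((\<lambda>y. infdist y ?H / norm (y - x)) \<longlongrightarrow> 0) (at x within frontier V)"
      proof (rule Lim_null_comparison)
        show "\<forall>\<^sub>F y in at x within frontier V. norm (infdist y ?H / norm (y - x)) \<le> (2 * (M * Cp)) * norm (y - x) powr \<alpha>"
          unfolding eventually_at_filter
          by (rule always_eventually) (auto simp: infdist_nonneg intro!: est)
        have "((\<lambda>y. norm (y - x)) \<longlongrightarrow> 0) (at x within frontier V)"
          by (intro tendsto_norm_zero) (auto intro!: tendsto_eq_intros)
        hence "((\<lambda>y. norm (y - x) powr \<alpha>) \<longlongrightarrow> 0) (at x within frontier V)"
          by (rule tendsto_zero_powrI) (use al in auto)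
        thus "((\<lambda>y. (2 * (M * Cp)) * norm (y - x) powr \<alpha>) \<longlongrightarrow> 0) (at x within frontier V)"
          by (rule tendsto_mult_right_zero)
      qed
    qed
  qed
  have half: "V \<subseteq> halfspace_at D x" if x: "x \<in> C" for x
  proof
    fix z assume "z \<in> V"
    hence "FF z \<le> 0" by (simp add: V_def)
    moreover have "D x (z - x) \<le> FF z" by (rule FF_aff[OF x])
    ultimately show "z \<in> halfspace_at D x" by (simp add: halfspace_at_def blinfun.diff_right)
  qed
  have sup: "supporting_body \<alpha> C D V"
    unfolding supporting_body_def using body fr FF_C tang half by auto
  have bnd: "bounded V" if bC: "bounded C"
  proof -
    obtain B where B: "\<forall>y\<in>C. norm y \<le> B" using bC by (auto simp: bounded_iff)
    have "\<forall>z\<in>V. norm z \<le> B + R"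
    proof
      fix z assume "z \<in> V"
      hence "FF z \<le> 0" by (simp add: V_def)
      then obtain v where v: "norm (z - v) \<le> R" "norm v \<le> B" using deep B by blast
      have "norm z \<le> norm (z - v) + norm v" using norm_triangle_ineq[of "z - v" v] by simp
      thus "norm z \<le> B + R" using v by simp
    qed
    thus ?thesis by (auto simp: bounded_iff)
  qed
  show ?thesis using sup bnd by blast
qed

end


lemma line_deriv:
  fixes F :: "'a::real_normed_vector \<Rightarrow> real"
  assumes der: "\<And>y. (F has_derivative blinfun_apply (DF y)) (at y)"
  shows "((\<lambda>s. F (x + s *\<^sub>R h)) has_real_derivative DF (x + s *\<^sub>R h) h) (at s within S)"
proof -
  have 1: "((\<lambda>s. x + s *\<^sub>R h) has_derivative (\<lambda>d. d *\<^sub>R h)) (at s within S)"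
    by (auto intro!: derivative_eq_intros)
  have "((\<lambda>s. F (x + s *\<^sub>R h)) has_derivative (\<lambda>d. DF (x + s *\<^sub>R h) (d *\<^sub>R h))) (at s within S)"
    using has_derivative_in_compose[OF 1 has_derivative_subset[OF der subset_UNIV]] by (simp add: o_def)
  thus ?thesis unfolding has_field_derivative_def
    by (rule has_derivative_eq_rhs) (simp add: blinfun.scaleR_right fun_eq_iff)
qed

lemma conv_lower:
  fixes F :: "'a::real_normed_vector \<Rightarrow> real"
  assumes cvx: "convex_on UNIV F" and der: "\<And>y. (F has_derivative blinfun_apply (DF y)) (at y)"
  shows "F x + DF x h \<le> F (x + h)"
proof -
  let ?phi = "\<lambda>s. F (x + s *\<^sub>R h)"
  have c: "convex_on UNIV ?phi"
  proof (rule convex_onI)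
    fix t a b :: real assume t: "0 < t" "t < 1"
    have "x + ((1 - t) * a + t * b) *\<^sub>R h = (1 - t) *\<^sub>R (x + a *\<^sub>R h) + t *\<^sub>R (x + b *\<^sub>R h)"
      by (simp add: algebra_simps)
    thus "?phi ((1 - t) *\<^sub>R a + t *\<^sub>R b) \<le> (1 - t) * ?phi a + t * ?phi b"
      using convex_onD[OF cvx, of t "x + a *\<^sub>R h" "x + b *\<^sub>R h"] t by simp
  qed simp
  have d: "(?phi has_real_derivative DF x h) (at 0 within UNIV)"
    using line_deriv[OF der, of x h 0 UNIV] by simp
  have "?phi 1 - ?phi 0 \<ge> DF x h * (1 - 0)"
    by (rule convex_on_imp_above_tangent[OF c _ _ _ d]) auto
  thus ?thesis by simp
qed

lemma holder_upper:
  fixes F :: "'a::real_normed_vector \<Rightarrow> real"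
  assumes der: "\<And>y. (F has_derivative blinfun_apply (DF y)) (at y)"
    and H: "\<And>x y. norm (DF x - DF y) \<le> KH * norm (x - y) powr \<alpha>" and al: "0 < \<alpha>" and KH: "0 < KH"
  shows "F (x + h) \<le> F x + DF x h + KH * norm h powr (1+\<alpha>)"
proof -
  let ?phi = "\<lambda>s. F (x + s *\<^sub>R h)"
  obtain \<xi> where xi: "\<xi> \<in> {0..1}" "?phi 1 - ?phi 0 = (\<lambda>d. DF (x + \<xi> *\<^sub>R h) h * d) (1 - 0)"
    by (rule mvt_very_simple[of 0 1 ?phi "\<lambda>s d. DF (x + s *\<^sub>R h) h * d", THEN bexE])
       (auto intro: line_deriv[OF der, unfolded has_field_derivative_def])
  have "DF (x + \<xi> *\<^sub>R h) h - DF x h = (DF (x + \<xi> *\<^sub>R h) - DF x) h" by (simp add: blinfun.diff_left)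
  also have "\<dots> \<le> norm (DF (x + \<xi> *\<^sub>R h) - DF x) * norm h"
    using norm_blinfun[of "DF (x + \<xi> *\<^sub>R h) - DF x" h] by simp
  also have "\<dots> \<le> (KH * norm (\<xi> *\<^sub>R h) powr \<alpha>) * norm h"
    using H[of "x + \<xi> *\<^sub>R h" x] by (intro mult_right_mono) auto
  also have "\<dots> \<le> (KH * norm h powr \<alpha>) * norm h"
    using xi(1) KH al by (intro mult_right_mono mult_left_mono powr_mono2) (auto simp: mult_left_le_one_le)
  also have "\<dots> = KH * norm h powr (1+\<alpha>)"
    by (cases "h = 0") (simp_all add: powr_add)
  finally show ?thesis using xi(2) by simp
qed

lemma key_convex:
  fixes F :: "'a::real_normed_vector \<Rightarrow> real" and DF :: "'a \<Rightarrow> 'a \<Rightarrow>\<^sub>L real"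
  assumes low: "\<And>x h. F x + DF x h \<le> F (x + h)"
    and up: "\<And>x h. F (x + h) \<le> F x + DF x h + KH * norm h powr (1+\<alpha>)"
    and al: "0 < \<alpha>" and KH: "0 < KH"
  shows "F x + DF x (y - x) + (1 / (4 * (4 * KH) powr (1/\<alpha>))) * norm (DF y - DF x) powr (1 + 1/\<alpha>) \<le> F y"
proof (cases "DF y - DF x = 0")
  case True
  thus ?thesis using low[of x "y - x"] by simp
next
  case False
  define N where "N = norm (DF y - DF x)"
  have N: "N > 0" using False by (simp add: N_def)
  obtain u where u: "norm u = 1" "N / 2 \<le> (DF y - DF x) u"
    using blinfun_unit_half[OF False] by (auto simp: N_def)
  define t where "t = (N / (4 * KH)) powr (1/\<alpha>)"
  have t: "t > 0" using N KH by (simp add: t_def)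
  have ta: "t powr \<alpha> = N / (4 * KH)" using N KH al by (simp add: t_def powr_powr)
  define w where "w = y - t *\<^sub>R u"
  have 1: "F x + DF x (w - x) \<le> F w" using low[of x "w - x"] by simp
  have 2: "F w \<le> F y + DF y (w - y) + KH * norm (w - y) powr (1+\<alpha>)" using up[of y "w - y"] by simp
  have nw: "norm (w - y) powr (1+\<alpha>) = t * t powr \<alpha>" using t u by (simp add: w_def powr_add)
  have wx: "w - x = (y - x) - t *\<^sub>R u" "w - y = - (t *\<^sub>R u)" by (simp_all add: w_def algebra_simps)
  have e: "DF x (w - x) - DF y (w - y) = DF x (y - x) + t * (DF y - DF x) u"
    unfolding wx by (simp only: blinfun.diff_right blinfun.scaleR_right blinfun.minus_right blinfun.diff_left right_diff_distrib real_scaleR_def)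
  have "F y \<ge> F x + DF x (y - x) + t * (DF y - DF x) u - KH * (t * t powr \<alpha>)"
    using 1 2 e nw by simp
  moreover have "t * (N / 2) \<le> t * (DF y - DF x) u" using u t by (intro mult_left_mono) auto
  moreover have "t * (N / 2) - KH * (t * t powr \<alpha>) = t * N / 4"
  proof -
    have "KH * (t * t powr \<alpha>) = t * (KH * (N / (4 * KH)))" unfolding ta by (simp only: mult_ac)
    also have "KH * (N / (4 * KH)) = N / 4" using KH by simp
    finally have X: "KH * (t * t powr \<alpha>) = t * (N / 4)" .
    show ?thesis unfolding X by (simp add: algebra_simps)
  qed
  moreover have "t * N / 4 = (1 / (4 * (4 * KH) powr (1/\<alpha>))) * N powr (1 + 1/\<alpha>)"
  proof -
    have "t = N powr (1/\<alpha>) / (4 * KH) powr (1/\<alpha>)"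
      unfolding t_def by (rule powr_divide)
    moreover have "N powr (1 + 1/\<alpha>) = N * N powr (1/\<alpha>)" using N by (simp add: powr_add)
    ultimately show ?thesis by (simp add: mult.commute)
  qed
  ultimately have "F x + DF x (y - x) + (1 / (4 * (4 * KH) powr (1/\<alpha>))) * N powr (1 + 1/\<alpha>) \<le> F y"
    by linarith
  thus ?thesis by (simp add: N_def)
qed


lemma small_ex:
  fixes X \<beta> \<alpha> :: real
  assumes "0 < \<alpha>" "0 < \<beta>"
  shows "\<exists>t0>0. \<forall>t. 0 < t \<and> t \<le> t0 \<longrightarrow> X * t powr \<alpha> < \<beta>"
proof -
  define t0 where "t0 = (\<beta> / (2 * (\<bar>X\<bar> + 1))) powr (1/\<alpha>)"
  have t0: "t0 > 0" using assms by (simp add: t0_def)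
  have "X * t powr \<alpha> < \<beta>" if t: "0 < t" "t \<le> t0" for t
  proof -
    have "t powr \<alpha> \<le> t0 powr \<alpha>" using t assms by (intro powr_mono2) auto
    also have "\<dots> = \<beta> / (2 * (\<bar>X\<bar> + 1))" using assms by (simp add: t0_def powr_powr)
    finally have "(\<bar>X\<bar> + 1) * t powr \<alpha> \<le> \<beta> / 2" by (simp add: field_simps)
    moreover have "X * t powr \<alpha> \<le> (\<bar>X\<bar> + 1) * t powr \<alpha>" by (intro mult_right_mono) auto
    ultimately show ?thesis using assms by simp
  qed
  thus ?thesis using t0 by blast
qed

lemma normalize_diff:
  fixes a b :: "'b::real_normed_vector"
  assumes "1 / M \<le> norm a" "0 < M" "b \<noteq> 0"
  shows "norm ((1 / norm a) *\<^sub>R a - (1 / norm b) *\<^sub>R b) \<le> 2 * M * norm (a - b)"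
proof -
  have "0 < 1 / M" using assms by simp
  hence na: "norm a > 0" using assms by linarith
  have nb: "norm b > 0" using assms by simp
  have e: "(1 / norm a) *\<^sub>R a - (1 / norm b) *\<^sub>R b = (1 / norm a) *\<^sub>R (a - b) + (1 / norm a - 1 / norm b) *\<^sub>R b"
    by (simp add: algebra_simps)
  have "norm ((1 / norm a - 1 / norm b) *\<^sub>R b) = \<bar>1 / norm a - 1 / norm b\<bar> * norm b" by simp
  also have "\<dots> = \<bar>norm b - norm a\<bar> / norm a" using na nb by (simp add: field_simps abs_div)
  also have "\<dots> \<le> norm (a - b) / norm a"
    using na norm_triangle_ineq3[of b a] by (intro divide_right_mono) (auto simp: norm_minus_commute)
  finally have 1: "norm ((1 / norm a - 1 / norm b) *\<^sub>R b) \<le> norm (a - b) / norm a" .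
  have "norm ((1 / norm a) *\<^sub>R a - (1 / norm b) *\<^sub>R b) \<le> norm (a - b) / norm a + norm (a - b) / norm a"
  proof -
    have "norm ((1 / norm a) *\<^sub>R (a - b)) = norm (a - b) / norm a" using na by simp
    thus ?thesis unfolding e using 1 norm_triangle_ineq[of "(1 / norm a) *\<^sub>R (a - b)" "(1 / norm a - 1 / norm b) *\<^sub>R b"]
      by linarith
  qed
  also have "\<dots> = 2 * norm (a - b) / norm a" by simp
  also have "\<dots> \<le> 2 * norm (a - b) / (1 / M)"
    using assms na by (intro divide_left_mono) auto
  also have "\<dots> = 2 * M * norm (a - b)" by simp
  finally show ?thesis .
qed

lemma segment_interior:
  fixes S :: "'b::real_normed_vector set"
  assumes cvx: "convex S" and x: "x \<in> S" and p: "ball p r \<subseteq> S" and r: "0 < r"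
    and s: "0 < s" "s \<le> 1"
  shows "x + s *\<^sub>R (p - x) \<in> interior S"
proof -
  let ?q = "x + s *\<^sub>R (p - x)"
  have "ball ?q (s * r) \<subseteq> S"
  proof
    fix z assume z: "z \<in> ball ?q (s * r)"
    define p' where "p' = p + (1/s) *\<^sub>R (z - ?q)"
    have "dist p p' = norm (z - ?q) / s" using s by (simp add: p'_def dist_norm)
    also have "\<dots> < r" using z s by (simp add: dist_norm norm_minus_commute field_simps)
    finally have "p' \<in> S" using p by auto
    moreover have "z = (1 - s) *\<^sub>R x + s *\<^sub>R p'"
      using s by (simp add: p'_def algebra_simps)
    ultimately show "z \<in> S" using convexD_alt[OF cvx x, of p' s] s by simp
  qed
  moreover have "0 < s * r" using s r by simp
  ultimately show ?thesis by (meson centre_in_ball interior_maximal open_ball subsetD)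
qed


locale given =
  fixes \<alpha> M :: real and F :: "'a::real_normed_vector \<Rightarrow> real" and DF :: "'a \<Rightarrow> 'a \<Rightarrow>\<^sub>L real"
    and V C :: "'a set" and D :: "'a \<Rightarrow> 'a \<Rightarrow>\<^sub>L real"
  assumes al: "0 < \<alpha>" "\<alpha> \<le> 1" and cvx: "convex_on UNIV F" and C1: "C1_alpha_with \<alpha> F DF"
    and Mp: "0 < M" and frF: "frontier V = F -` {1}"
    and bnds: "\<And>x. x \<in> frontier V \<Longrightarrow> 1 / M \<le> norm (DF x) \<and> norm (DF x) \<le> M"
    and body: "convex_body V" and CV: "C \<subseteq> frontier V"
    and tang: "\<And>x. x \<in> C \<Longrightarrow> tangent_at (hyperplane_at D x) (frontier V) x"
    and half: "\<And>x. x \<in> C \<Longrightarrow> V \<subseteq> halfspace_at D x"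
    and Dn: "\<And>x. x \<in> C \<Longrightarrow> norm (D x) = 1"
begin

lemma der: "(F has_derivative blinfun_apply (DF y)) (at y)"
  using C1 by (simp add: C1_alpha_with_def)

definition KH where "KH = (SOME K. K > 0 \<and> (\<forall>x y. norm (DF x - DF y) \<le> K * norm (x - y) powr \<alpha>))"

lemma KH: "KH > 0" "\<And>x y. norm (DF x - DF y) \<le> KH * norm (x - y) powr \<alpha>"
proof -
  have "\<exists>K. K > 0 \<and> (\<forall>x y. norm (DF x - DF y) \<le> K * norm (x - y) powr \<alpha>)"
    using C1 by (simp add: C1_alpha_with_def)
  hence "KH > 0 \<and> (\<forall>x y. norm (DF x - DF y) \<le> KH * norm (x - y) powr \<alpha>)"
    unfolding KH_def by (rule someI_ex)
  thus "KH > 0" "\<And>x y. norm (DF x - DF y) \<le> KH * norm (x - y) powr \<alpha>" by auto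
qed

lemma low: "F x + DF x h \<le> F (x + h)" by (rule conv_lower[OF cvx der])
lemma up: "F (x + h) \<le> F x + DF x h + KH * norm h powr (1+\<alpha>)"
  by (rule holder_upper[OF der KH(2) al(1) KH(1)])

lemma cont: "continuous_on UNIV F"
  using der by (intro continuous_at_imp_continuous_on) (blast intro: has_derivative_continuous)

lemma closedV: "closed V" using body by (simp add: convex_body_def)
lemma convexV: "convex V" using body by (simp add: convex_body_def)

lemma frV: "frontier V \<subseteq> V" using closedV by (simp add: frontier_subset_closed)

lemma Cfr: "x \<in> C \<Longrightarrow> F x = 1" using CV frF by auto
lemma DFnz: "x \<in> C \<Longrightarrow> DF x \<noteq> 0"
proof -
  assume x: "x \<in> C"
  have "1 / M \<le> norm (DF x)" using bnds CV x by auto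
  moreover have "0 < 1 / M" using Mp by simp
  ultimately show ?thesis by auto
qed

lemma ker:
  assumes x: "x \<in> C" and v: "DF x v = 0"
  shows "D x v = 0"
proof (rule ccontr)
  assume Lv: "D x v \<noteq> 0"
  let ?A = "DF x" and ?L = "D x" and ?H = "hyperplane_at D x"
  have Fx: "F x = 1" by (rule Cfr[OF x])
  obtain w where w: "?A w = 1" using blinfun_exists_one[OF DFnz[OF x]] by blast
  have wnz: "w \<noteq> 0" using w by auto
  have vnz: "v \<noteq> 0" using Lv by auto
  define a where "a = \<bar>?L v\<bar>"
  have a: "a > 0" using Lv by (simp add: a_def)
  define nw where "nw = norm w"
  have nw: "nw > 0" using wnz by (simp add: nw_def)
  define \<beta> where "\<beta> = a / (4 * nw)"
  have \<beta>: "\<beta> > 0" using a nw by (simp add: \<beta>_def)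
  define \<rho> where "\<rho> = (3/4 * a) / (norm v + a / 4)"
  have "0 < norm v + a / 4" using a by (intro add_nonneg_pos) auto
  hence \<rho>: "\<rho> > 0" using a unfolding \<rho>_def by (intro divide_pos_pos) auto
  have "((\<lambda>y. infdist y ?H / norm (y - x)) \<longlongrightarrow> 0) (at x within frontier V)"
    using tang[OF x] by (simp add: tangent_at_def)
  from tendstoD[OF this \<rho>] obtain d where d: "d > 0"
    "\<And>y. y \<in> frontier V \<Longrightarrow> y \<noteq> x \<Longrightarrow> dist y x < d \<Longrightarrow> \<bar>infdist y ?H / norm (y - x)\<bar> < \<rho>"
    unfolding eventually_at by (auto simp: dist_real_def)
  define X where "X = KH * norm (v - \<beta> *\<^sub>R w) powr (1+\<alpha>)"
  obtain t0 where t0: "t0 > 0" "\<And>t. 0 < t \<Longrightarrow> t \<le> t0 \<Longrightarrow> X * t powr \<alpha> < \<beta>"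
    using small_ex[OF al(1) \<beta>, of X] by blast
  define Y where "Y = norm v + \<beta> * nw"
  have Y: "Y > 0" using vnz \<beta> nw by (simp add: Y_def add_pos_pos)
  define t where "t = min t0 (d / (2 * Y))"
  have t: "0 < t" "t \<le> t0" "t * Y < d" using t0 d Y by (auto simp: t_def min_def field_simps)
  let ?phi = "\<lambda>s. F (x + t *\<^sub>R v + s *\<^sub>R w)"
  have pcont: "continuous_on {- (\<beta> * t) .. \<beta> * t} ?phi"
    by (rule continuous_on_compose2[OF cont]) (auto intro!: continuous_intros)
  have p1: "?phi (\<beta> * t) \<ge> 1"
  proof -
    have "F x + ?A (t *\<^sub>R v + (\<beta> * t) *\<^sub>R w) \<le> F (x + (t *\<^sub>R v + (\<beta> * t) *\<^sub>R w))" by (rule low)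
    moreover have "?A (t *\<^sub>R v + (\<beta> * t) *\<^sub>R w) = \<beta> * t"
      using v w by (simp add: blinfun.add_right blinfun.scaleR_right)
    moreover have "0 < \<beta> * t" using \<beta> t by simp
    ultimately show ?thesis using Fx by (simp add: add.assoc)
  qed
  have p2: "?phi (- (\<beta> * t)) \<le> 1"
  proof -
    define k where "k = t *\<^sub>R (v - \<beta> *\<^sub>R w)"
    have xk: "x + t *\<^sub>R v + (- (\<beta> * t)) *\<^sub>R w = x + k" by (simp add: k_def algebra_simps)
    have 1: "F (x + k) \<le> F x + ?A k + KH * norm k powr (1+\<alpha>)" by (rule up)
    have 2: "?A k = - (\<beta> * t)"
      using v w by (simp add: k_def blinfun.diff_right blinfun.scaleR_right)
    have 3: "KH * norm k powr (1+\<alpha>) = t * (X * t powr \<alpha>)"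
      using t by (simp add: k_def X_def powr_mult powr_add)
    have 4: "t * (X * t powr \<alpha>) \<le> t * \<beta>" using t0(2)[OF t(1,2)] t by (intro mult_left_mono) auto
    have "F (x + k) \<le> 1" using 1 2 3 4 Fx by (simp add: mult.commute)
    thus ?thesis by (simp only: xk)
  qed
  obtain s where s: "- (\<beta> * t) \<le> s" "s \<le> \<beta> * t" "?phi s = 1"
    using IVT'[of ?phi "- (\<beta> * t)" 1 "\<beta> * t", OF p2 p1 _ pcont] \<beta> t by auto
  define y where "y = x + t *\<^sub>R v + s *\<^sub>R w"
  have yfr: "y \<in> frontier V" using s(3) frF by (simp add: y_def)
  have Ay: "?A (y - x) = s" using v w by (simp add: y_def blinfun.add_right blinfun.scaleR_right)
  have yx: "y \<noteq> x"
  proof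
    assume "y = x"
    hence "s = 0" using Ay by simp
    hence "t *\<^sub>R v = 0" using \<open>y = x\<close> by (simp add: y_def)
    thus False using t vnz by simp
  qed
  have abss: "\<bar>s\<bar> \<le> \<beta> * t" using s by simp
  have ny: "norm (y - x) \<le> t * Y"
  proof -
    have "y - x = t *\<^sub>R v + s *\<^sub>R w" by (simp add: y_def)
    hence "norm (y - x) \<le> norm (t *\<^sub>R v) + norm (s *\<^sub>R w)"
      using norm_triangle_ineq[of "t *\<^sub>R v" "s *\<^sub>R w"] by simp
    also have "\<dots> \<le> t * norm v + (\<beta> * t) * nw"
      using t abss nw by (auto simp: nw_def intro!: mult_right_mono)
    finally show ?thesis by (simp add: Y_def algebra_simps)
  qed
  have dyx: "dist y x < d" using ny t by (simp add: dist_norm)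
  have Lw: "\<bar>?L w\<bar> \<le> nw" using norm_blinfun[of "?L" w] Dn[OF x] by (simp add: nw_def)
  have Ly: "3/4 * t * a \<le> \<bar>?L (y - x)\<bar>"
  proof -
    have e: "?L (y - x) = t * ?L v + s * ?L w" by (simp add: y_def blinfun.add_right blinfun.scaleR_right)
    have "\<bar>s * ?L w\<bar> \<le> (\<beta> * t) * nw" using abss Lw by (simp add: abs_mult mult_mono)
    also have "\<dots> = t * a / 4" using nw by (simp add: \<beta>_def)
    finally have "\<bar>s * ?L w\<bar> \<le> t * a / 4" .
    moreover have "\<bar>t * ?L v\<bar> = t * a" using t by (simp add: a_def abs_mult)
    ultimately show ?thesis unfolding e by linarith
  qed
  have infd: "\<bar>?L (y - x)\<bar> \<le> infdist y ?H"
  proof (rule infdist_geI)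
    show "?H \<noteq> {}" by (auto simp: hyperplane_at_def)
    fix z assume "z \<in> ?H"
    hence "?L z = ?L x" by (simp add: hyperplane_at_def)
    hence "?L (y - x) = ?L (y - z)" by (simp add: blinfun.diff_right)
    also have "\<bar>\<dots>\<bar> \<le> norm (y - z)" using norm_blinfun[of "?L" "y - z"] Dn[OF x] by simp
    finally show "\<bar>?L (y - x)\<bar> \<le> dist y z" by (simp add: dist_norm)
  qed
  have Yeq: "Y = norm v + a / 4" using nw by (simp add: Y_def \<beta>_def)
  have "(3/4 * t * a) / (t * Y) = (3/4 * a) / Y"
    using t(1) Y by (simp add: field_simps)
  hence "\<rho> = (3/4 * t * a) / (t * Y)" by (simp add: \<rho>_def Yeq)
  also have "\<dots> \<le> infdist y ?H / norm (y - x)"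
    by (rule frac_le) (use Ly infd ny yx in auto)
  also have "\<dots> < \<rho>" using d(2)[OF yfr yx dyx] by (simp add: infdist_nonneg)
  finally show False by simp
qed

lemma lam:
  assumes x: "x \<in> C"
  shows "\<exists>lc. (\<forall>h. D x h = lc * DF x h) \<and> \<bar>lc\<bar> * norm (DF x) = 1"
proof -
  obtain w where w: "DF x w = 1" using blinfun_exists_one[OF DFnz[OF x]] by blast
  define lc where "lc = D x w"
  have h: "D x h = lc * DF x h" for h
  proof -
    have "DF x (h - DF x h *\<^sub>R w) = 0" using w by (simp add: blinfun.diff_right blinfun.scaleR_right)
    hence "D x (h - DF x h *\<^sub>R w) = 0" by (rule ker[OF x])
    thus ?thesis by (simp add: blinfun.diff_right blinfun.scaleR_right lc_def)
  qed
  have "D x = lc *\<^sub>R DF x" by (rule blinfun_eqI) (simp add: h blinfun.scaleR_left)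
  hence "norm (D x) = \<bar>lc\<bar> * norm (DF x)" by simp
  thus ?thesis using h Dn[OF x] by auto
qed

end


context given begin

lemma int_not_fr: "p \<in> interior V \<Longrightarrow> F p \<noteq> 1"
  using frF by (auto simp: frontier_def)

lemma Dneg:
  assumes x: "x \<in> C" and p: "ball p r \<subseteq> V" and r: "0 < r"
  shows "D x (p - x) < 0"
proof -
  have "D x \<noteq> 0" using Dn[OF x] by auto
  then obtain u where u: "norm u = 1" "norm (D x) / 2 \<le> D x u" using blinfun_unit_half by blast
  have "p + (r/2) *\<^sub>R u \<in> ball p r" using u r by (simp add: dist_norm)
  hence "p + (r/2) *\<^sub>R u \<in> halfspace_at D x" using p half[OF x] by blast
  hence "D x p + (r/2) * D x u \<le> D x x"
    by (simp add: halfspace_at_def blinfun.add_right blinfun.scaleR_right)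
  moreover have "0 < (r/2) * D x u" using u r Dn[OF x] by simp
  ultimately show ?thesis by (simp add: blinfun.diff_right)
qed

lemma signs:
  assumes p: "ball p r \<subseteq> V" and r: "0 < r" and x: "x \<in> C"
  shows "F p < 1 \<Longrightarrow> \<forall>h. D x h = DF x h / norm (DF x)"
    and "F p > 1 \<Longrightarrow> \<forall>h. D x h = - DF x h / norm (DF x)"
proof -
  obtain lc where lc: "\<And>h. D x h = lc * DF x h" "\<bar>lc\<bar> * norm (DF x) = 1" using lam[OF x] by blast
  have nA: "norm (DF x) > 0" using DFnz[OF x] by simp
  have Dp: "lc * DF x (p - x) < 0" using Dneg[OF x p r] lc(1) by simp
  have Fx: "F x = 1" by (rule Cfr[OF x])
  have xV: "x \<in> V" using CV x frV by blast
  show "F p < 1 \<Longrightarrow> \<forall>h. D x h = DF x h / norm (DF x)"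
  proof -
    assume Fp: "F p < 1"
    have "F x + DF x (p - x) \<le> F (x + (p - x))" by (rule low)
    hence A: "DF x (p - x) < 0" using Fp Fx by simp
    have "lc > 0"
    proof (rule ccontr)
      assume "\<not> lc > 0"
      hence "0 \<le> lc * DF x (p - x)" using A by (simp add: mult_nonpos_nonpos)
      thus False using Dp by simp
    qed
    hence "lc = 1 / norm (DF x)" using lc(2) nA by (simp add: field_simps)
    thus "\<forall>h. D x h = DF x h / norm (DF x)" using lc(1) by simp
  qed
  show "F p > 1 \<Longrightarrow> \<forall>h. D x h = - DF x h / norm (DF x)"
  proof -
    assume Fp: "F p > 1"
    define N where "N = norm (p - x)"
    have A: "- DF x (p - x) \<le> 0"
    proof (rule small_le[OF al(1)])
      fix s :: real assume s: "0 < s" "s \<le> 1"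
      let ?q = "\<lambda>s. x + s *\<^sub>R (p - x)"
      have qint: "?q s' \<in> interior V" if "0 < s'" "s' \<le> 1" for s'
        by (rule segment_interior[OF convexV xV p r that])
      have g1: "F (?q s) > 1"
      proof (rule ccontr)
        assume "\<not> F (?q s) > 1"
        hence "F (?q s) < 1" using int_not_fr[OF qint[OF s]] by simp
        moreover have "continuous_on {s..1} (\<lambda>s. F (?q s))"
          by (rule continuous_on_compose2[OF cont]) (auto intro!: continuous_intros)
        ultimately obtain s' where "s \<le> s'" "s' \<le> 1" "F (?q s') = 1"
          using IVT'[of "\<lambda>s. F (?q s)" s 1 1] Fp s by auto
        thus False using int_not_fr[OF qint] s by auto
      qed
      have g2: "F (x + s *\<^sub>R (p - x)) \<le> F x + DF x (s *\<^sub>R (p - x)) + KH * norm (s *\<^sub>R (p - x)) powr (1+\<alpha>)"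
        by (rule up)
      have g3: "KH * norm (s *\<^sub>R (p - x)) powr (1+\<alpha>) = s * ((KH * N powr (1+\<alpha>)) * s powr \<alpha>)"
        using s by (simp add: N_def powr_mult powr_add mult_ac)
      have g4: "DF x (s *\<^sub>R (p - x)) = s * DF x (p - x)" by (simp add: blinfun.scaleR_right)
      have "0 < s * DF x (p - x) + s * ((KH * N powr (1+\<alpha>)) * s powr \<alpha>)"
        using g1 g2 g3 g4 Fx by linarith
      hence "0 < s * (DF x (p - x) + (KH * N powr (1+\<alpha>)) * s powr \<alpha>)" by (simp add: distrib_left)
      hence "0 < DF x (p - x) + (KH * N powr (1+\<alpha>)) * s powr \<alpha>" using s by (simp add: zero_less_mult_iff)
      thus "- DF x (p - x) \<le> (KH * N powr (1+\<alpha>)) * s powr \<alpha>" by simp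
    qed
    have "lc < 0"
    proof (rule ccontr)
      assume "\<not> lc < 0"
      hence "0 \<le> lc * DF x (p - x)" using A by simp
      thus False using Dp by simp
    qed
    hence "lc = - 1 / norm (DF x)" using lc(2) nA by (simp add: field_simps)
    thus "\<forall>h. D x h = - DF x h / norm (DF x)" using lc(1) by simp
  qed
qed

lemma cond_holds:
  "\<exists>\<delta>>0. \<forall>x\<in>C. \<forall>y\<in>C. D y (y - x) \<ge> \<delta> * norm (D x - D y) powr (1 + 1 / \<alpha>)"
proof -
  obtain p where "p \<in> interior V" using body by (auto simp: convex_body_def)
  then obtain r where r: "0 < r" "ball p r \<subseteq> V" by (meson mem_interior)
  have Fp: "F p \<noteq> 1" using int_not_fr \<open>p \<in> interior V\<close> by blast
  define q where "q = 1 + 1 / \<alpha>"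
  define cK where "cK = 1 / (4 * (4 * KH) powr (1/\<alpha>))"
  have cK: "0 < cK" using KH by (simp add: cK_def)
  have key: "cK * norm (DF x - DF y) powr q \<le> DF y (y - x)" if xy: "x \<in> C" "y \<in> C" for x y
  proof -
    have "F y + DF y (x - y) + cK * norm (DF x - DF y) powr q \<le> F x"
      unfolding cK_def q_def by (rule key_convex[OF low up al(1) KH(1)])
    moreover have "DF y (x - y) = - DF y (y - x)" by (simp add: blinfun.diff_right)
    ultimately show ?thesis using Cfr[OF xy(1)] Cfr[OF xy(2)] by simp
  qed
  show ?thesis
  proof (cases "F p < 1")
    case True
    have sg: "\<And>x. x \<in> C \<Longrightarrow> D x = (1 / norm (DF x)) *\<^sub>R DF x"
      using signs(1)[OF r(2) r(1) _ True] by (intro blinfun_eqI) (simp add: blinfun.scaleR_left)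
    define \<delta> where "\<delta> = cK / (M * (2 * M) powr q)"
    have \<delta>: "0 < \<delta>" using cK Mp by (simp add: \<delta>_def)
    have "\<delta> * norm (D x - D y) powr q \<le> D y (y - x)" if xy: "x \<in> C" "y \<in> C" for x y
    proof -
      let ?N = "norm (DF x - DF y)"
      have bx: "1 / M \<le> norm (DF x)" and b_y: "1 / M \<le> norm (DF y)" "norm (DF y) \<le> M"
        using bnds CV xy by auto
      have nDy: "norm (DF y) > 0" using DFnz[OF xy(2)] by simp
      have "norm (D x - D y) \<le> 2 * M * ?N"
        unfolding sg[OF xy(1)] sg[OF xy(2)] by (rule normalize_diff[OF bx Mp DFnz[OF xy(2)]])
      hence "norm (D x - D y) powr q \<le> (2 * M * ?N) powr q"
        using al by (intro powr_mono2) (auto simp: q_def)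
      also have "\<dots> = (2 * M) powr q * ?N powr q" using Mp by (simp add: powr_mult)
      finally have 1: "\<delta> * norm (D x - D y) powr q \<le> \<delta> * ((2 * M) powr q * ?N powr q)"
        using \<delta> by (intro mult_left_mono) auto
      have 2: "\<delta> * ((2 * M) powr q * ?N powr q) = cK * ?N powr q / M"
        using Mp by (simp add: \<delta>_def)
      have "cK * ?N powr q / M \<le> cK * ?N powr q / norm (DF y)"
        using b_y nDy cK Mp by (intro divide_left_mono) (auto intro: mult_pos_pos)
      also have "\<dots> \<le> DF y (y - x) / norm (DF y)"
        using key[OF xy] nDy by (intro divide_right_mono) auto
      also have "\<dots> = D y (y - x)" using signs(1)[OF r(2) r(1) xy(2) True] by simp
      finally show ?thesis using 1 2 by simp
    qed
    thus ?thesis using \<delta> unfolding q_def by blast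
  next
    case False
    hence gt: "F p > 1" using Fp by simp
    have "1 * norm (D x - D y) powr q \<le> D y (y - x)" if xy: "x \<in> C" "y \<in> C" for x y
    proof -
      have nDy: "norm (DF y) > 0" using DFnz[OF xy(2)] by simp
      have xV: "x \<in> V" using CV xy frV by blast
      hence "D y x \<le> D y y" using half[OF xy(2)] by (auto simp: halfspace_at_def)
      hence ge: "0 \<le> D y (y - x)" by (simp add: blinfun.diff_right)
      have "D y (y - x) = - DF y (y - x) / norm (DF y)" using signs(2)[OF r(2) r(1) xy(2) gt] by simp
      hence eqn: "D y (y - x) * norm (DF y) = - DF y (y - x)" using nDy by (simp add: divide_simps)
      moreover have "0 \<le> D y (y - x) * norm (DF y)" using ge by simp
      ultimately have "DF y (y - x) \<le> 0" by linarith
      hence "cK * norm (DF x - DF y) powr q \<le> 0" using key[OF xy] by simp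
      hence "norm (DF x - DF y) powr q \<le> 0" using cK by (simp add: mult_le_0_iff)
      hence "DF x = DF y" by simp
      hence "D x = D y" using signs(2)[OF r(2) r(1) _ gt] xy by (intro blinfun_eqI) simp
      thus ?thesis using ge by simp
    qed
    thus ?thesis unfolding q_def by (intro exI[of _ 1]) auto
  qed
qed

end


theorem theorem3p4:
  fixes \<alpha> :: real and C :: "'a::banach set" and D :: "'a \<Rightarrow> ('a \<Rightarrow>\<^sub>L real)"
  assumes "0 < \<alpha>" and "\<alpha> \<le> 1"
    and "\<forall>x::'a. x \<noteq> 0 \<longrightarrow> (\<lambda>z. norm z) differentiable (at x)"
    and "smoothness_power_type \<alpha> TYPE('a)"
    and "\<forall>x\<in>C. norm (D x) = 1"
  shows "((\<exists>V. supporting_body \<alpha> C D V) \<longleftrightarrow>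
          (\<exists>\<delta>>0. \<forall>x\<in>C. \<forall>y\<in>C. D y (y - x) \<ge> \<delta> * norm (D x - D y) powr (1 + 1 / \<alpha>)))
      \<and> (bounded C \<longrightarrow> (\<exists>V. supporting_body \<alpha> C D V) \<longrightarrow>
          (\<exists>V. bounded V \<and> supporting_body \<alpha> C D V))"
proof -
  note al = assms(1,2) and sm = assms(4) and Dn = assms(5)
  let ?cond = "\<exists>\<delta>>0. \<forall>x\<in>C. \<forall>y\<in>C. D y (y - x) \<ge> \<delta> * norm (D x - D y) powr (1 + 1 / \<alpha>)"
  have dir1: ?cond if ex: "\<exists>V. supporting_body \<alpha> C D V"
  proof -
    obtain V where V: "supporting_body \<alpha> C D V" using ex by blast
    then obtain M F DF where body: "convex_body V" and M: "M > 0" and cvx: "convex_on UNIV F"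
      and C1: "C1_alpha_with \<alpha> F DF" and fr: "frontier V = F -` {1}"
      and bn: "\<forall>x\<in>frontier V. 1 / M \<le> norm (DF x) \<and> norm (DF x) \<le> M"
      and CV: "C \<subseteq> frontier V"
      and tg: "\<forall>x\<in>C. tangent_at (hyperplane_at D x) (frontier V) x \<and> V \<subseteq> halfspace_at D x"
      unfolding supporting_body_def C1_alpha_body_def by blast
    interpret given \<alpha> M F DF V C D
      by unfold_locales (use al cvx C1 M fr bn body CV tg Dn in auto)
    show ?thesis by (rule cond_holds)
  qed
  have dir2: "\<exists>V. supporting_body \<alpha> C D V \<and> (bounded C \<longrightarrow> bounded V)" if c: ?cond
  proof (cases "C = {}")
    case True
    obtain V :: "'a set" where "bounded V" "C1_alpha_body \<alpha> V" using empty_case[OF sm al] by blast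
    thus ?thesis using True by (auto simp: supporting_body_def)
  next
    case False
    obtain \<delta> where \<delta>: "\<delta> > 0" "\<forall>x\<in>C. \<forall>y\<in>C. D y (y - x) \<ge> \<delta> * norm (D x - D y) powr (1 + 1 / \<alpha>)"
      using c by blast
    obtain K where K: "K > 0" and Kh: "\<And>t (x::'a) (h::'a). t > 0 \<Longrightarrow> norm x = 1 \<Longrightarrow> norm h = 1 \<Longrightarrow>
        (norm (x + t *\<^sub>R h) + norm (x - t *\<^sub>R h)) / 2 - 1 \<le> K * t powr (1 + \<alpha>)"
      using smooth_K[OF sm] by blast
    interpret constr \<alpha> \<delta> K C D
      by unfold_locales (use al \<delta> K Kh False Dn in auto)
    show ?thesis by (rule construct)
  qed
  show ?thesis
  proof (intro conjI impI)
    show "(\<exists>V. supporting_body \<alpha> C D V) \<longleftrightarrow> ?cond" using dir1 dir2 by blast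
    assume "bounded C" "\<exists>V. supporting_body \<alpha> C D V"
    thus "\<exists>V. bounded V \<and> supporting_body \<alpha> C D V" using dir1 dir2 by blast
  qed
qed

end
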